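(* Let $\mathcal{G}$ be a dipath space, let $A,B\subseteq V(\mathcal{G})$ and let $k$ be a natural number. Then either there exists a set $X\subseteq V(\mathcal{G})$ with $|X|<k$ meeting every $A$–$B$-path in $\mathcal{G}$, or there exists a set of $k$ pairwise disjoint $A$–$B$-paths in $\mathcal{G}$.
   Context: A subset $Y$ of a linearly ordered set $X$ is called complete (in $X$) if every nonempty $Z \subseteq Y$ has a supremum and an infimum in $X$ and both lie in $Y$. A path is a linearly ordered set $(P,\le_P)$ that is complete in itself. Distinct paths may share elements; intersections and unions of paths refer to their underlying sets; paths are disjoint if their underlying sets are disjoint. A set of paths is compatible if for any two paths $P,Q$ in it, $P\cap Q$ is complete in $P$ (with the order of $P$). For $x \le y$ in a path $P$, the segment of $P$ from $x$ to $y$ is the interval $[x,y]$ of $P$ with the induced order. A path $P$ connects to a path $Q$ if $P \cap Q=\{x\}$ where $x=\max P=\min Q$; in this case the concatenation of $P$ and $Q$ is $P\cup Q$ with the order extending both orders in which every element of $P$ precedes every element of $Q$. A dipath space is a compatible set of paths closed under segments and under concatenations (whenever $P,Q$ are members and $P$ connects to $Q$, their concatenation is a member). $V(\mathcal{G})$ is the union of the underlying sets of the paths of $\mathcal{G}$. An $A$–$B$-path in $\mathcal{G}$ is a path $R\in\mathcal{G}$ with $R\cap A=\{\min R\}$ and $R\cap B=\{\max R\}$. A set meets a path if it intersects its underlying set. *)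

theory Defs
  imports Main
begin

text \<open>A path is represented by its order relation r :: 'a rel (pairs (x,y) meaning x \<le> y);
  its underlying set is Field r.\<close>

definition is_sup :: "'a rel \<Rightarrow> 'a set \<Rightarrow> 'a \<Rightarrow> bool" where
  "is_sup r Z s \<longleftrightarrow> s \<in> Field r \<and> (\<forall>z\<in>Z. (z, s) \<in> r) \<and>
     (\<forall>u\<in>Field r. (\<forall>z\<in>Z. (z, u) \<in> r) \<longrightarrow> (s, u) \<in> r)"

definition is_inf :: "'a rel \<Rightarrow> 'a set \<Rightarrow> 'a \<Rightarrow> bool" where
  "is_inf r Z i \<longleftrightarrow> i \<in> Field r \<and> (\<forall>z\<in>Z. (i, z) \<in> r) \<and>
     (\<forall>u\<in>Field r. (\<forall>z\<in>Z. (u, z) \<in> r) \<longrightarrow> (u, i) \<in> r)"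

definition complete_in :: "'a rel \<Rightarrow> 'a set \<Rightarrow> bool" where
  "complete_in r Y \<longleftrightarrow> Y \<subseteq> Field r \<and>
     (\<forall>Z. Z \<noteq> {} \<and> Z \<subseteq> Y \<longrightarrow>
        (\<exists>s. is_sup r Z s \<and> s \<in> Y) \<and> (\<exists>i. is_inf r Z i \<and> i \<in> Y))"

definition is_path :: "'a rel \<Rightarrow> bool" where
  "is_path r \<longleftrightarrow> linear_order_on (Field r) r \<and> complete_in r (Field r)"

definition compatible :: "'a rel set \<Rightarrow> bool" where
  "compatible G \<longleftrightarrow> (\<forall>P\<in>G. \<forall>Q\<in>G. complete_in P (Field P \<inter> Field Q))"

definition is_max :: "'a rel \<Rightarrow> 'a \<Rightarrow> bool" where
  "is_max r x \<longleftrightarrow> x \<in> Field r \<and> (\<forall>z\<in>Field r. (z, x) \<in> r)"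

definition is_min :: "'a rel \<Rightarrow> 'a \<Rightarrow> bool" where
  "is_min r x \<longleftrightarrow> x \<in> Field r \<and> (\<forall>z\<in>Field r. (x, z) \<in> r)"

definition segment :: "'a rel \<Rightarrow> 'a \<Rightarrow> 'a \<Rightarrow> 'a rel" where
  "segment P x y = (let I = {z \<in> Field P. (x, z) \<in> P \<and> (z, y) \<in> P} in P \<inter> (I \<times> I))"

definition connects :: "'a rel \<Rightarrow> 'a rel \<Rightarrow> bool" where
  "connects P Q \<longleftrightarrow> (\<exists>x. Field P \<inter> Field Q = {x} \<and> is_max P x \<and> is_min Q x)"

definition concat :: "'a rel \<Rightarrow> 'a rel \<Rightarrow> 'a rel" where
  "concat P Q = P \<union> Q \<union> (Field P \<times> Field Q)"

definition dipath_space :: "'a rel set \<Rightarrow> bool" where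
  "dipath_space G \<longleftrightarrow> (\<forall>P\<in>G. is_path P) \<and> compatible G \<and>
     (\<forall>P\<in>G. \<forall>x y. (x, y) \<in> P \<longrightarrow> segment P x y \<in> G) \<and>
     (\<forall>P\<in>G. \<forall>Q\<in>G. connects P Q \<longrightarrow> concat P Q \<in> G)"

definition vertices :: "'a rel set \<Rightarrow> 'a set" where
  "vertices G = \<Union> (Field ` G)"

definition AB_path :: "'a rel set \<Rightarrow> 'a set \<Rightarrow> 'a set \<Rightarrow> 'a rel \<Rightarrow> bool" where
  "AB_path G A B R \<longleftrightarrow> R \<in> G \<and>
     (\<exists>m. is_min R m \<and> Field R \<inter> A = {m}) \<and>
     (\<exists>M. is_max R M \<and> Field R \<inter> B = {M})"

end

theory Submission
  imports Defs
begin


lemma path_po: "is_path P \<Longrightarrow> partial_order_on (Field P) P"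
  unfolding is_path_def linear_order_on_def by simp

lemma path_refl: "is_path P \<Longrightarrow> x \<in> Field P \<Longrightarrow> (x, x) \<in> P"
  by (rule refl_onD[OF partial_order_onD(1)[OF path_po]])

lemma path_trans: "is_path P \<Longrightarrow> (x, y) \<in> P \<Longrightarrow> (y, z) \<in> P \<Longrightarrow> (x, z) \<in> P"
  by (rule transD[OF partial_order_onD(2)[OF path_po]])

lemma path_antisym: "is_path P \<Longrightarrow> (x, y) \<in> P \<Longrightarrow> (y, x) \<in> P \<Longrightarrow> x = y"
  by (rule antisymD[OF partial_order_onD(3)[OF path_po]])

lemma path_total:
  assumes "is_path P" "x \<in> Field P" "y \<in> Field P" shows "(x, y) \<in> P \<or> (y, x) \<in> P"
proof (cases "x = y")
  case True
  then show ?thesis using path_refl[OF assms(1,2)] by simp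
next
  case False
  have "linear_order_on (Field P) P" using assms(1) unfolding is_path_def by (elim conjE)
  then have "total_on (Field P) P" unfolding linear_order_on_def by (elim conjE)
  then show ?thesis using False assms(2,3) unfolding total_on_def by blast
qed

lemma field_mem: "(x, y) \<in> P \<Longrightarrow> x \<in> Field P \<and> y \<in> Field P"
  by (auto simp: Field_def)

lemma is_min_unique:
  assumes "is_path P" "is_min P a" "is_min P b" shows "a = b"
proof -
  have "(a, b) \<in> P" "(b, a) \<in> P" using assms(2,3) unfolding is_min_def by blast+
  then show ?thesis using path_antisym[OF assms(1)] by blast
qed

lemma is_max_unique:
  assumes "is_path P" "is_max P a" "is_max P b" shows "a = b"
proof -
  have "(a, b) \<in> P" "(b, a) \<in> P" using assms(2,3) unfolding is_max_def by blast+
  then show ?thesis using path_antisym[OF assms(1)] by blast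
qed

lemma ds_path: "dipath_space G \<Longrightarrow> P \<in> G \<Longrightarrow> is_path P"
  unfolding dipath_space_def by blast

lemma ds_compat: "dipath_space G \<Longrightarrow> P \<in> G \<Longrightarrow> Q \<in> G \<Longrightarrow> complete_in P (Field P \<inter> Field Q)"
  unfolding dipath_space_def compatible_def by blast

lemma ds_seg: "dipath_space G \<Longrightarrow> P \<in> G \<Longrightarrow> (x, y) \<in> P \<Longrightarrow> segment P x y \<in> G"
  unfolding dipath_space_def by blast

lemma complete_min:
  assumes "complete_in P Y" "Y \<noteq> {}"
  shows "\<exists>i\<in>Y. \<forall>y\<in>Y. (i, y) \<in> P"
  using assms unfolding complete_in_def is_inf_def by blast

lemma complete_max:
  assumes "complete_in P Y" "Y \<noteq> {}"
  shows "\<exists>i\<in>Y. \<forall>y\<in>Y. (y, i) \<in> P"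
  using assms unfolding complete_in_def is_sup_def by blast

lemma inter_min:
  assumes "dipath_space G" "P \<in> G" "Q \<in> G" "Field P \<inter> Field Q \<noteq> {}"
  shows "\<exists>i\<in>Field P \<inter> Field Q. \<forall>y\<in>Field P \<inter> Field Q. (i, y) \<in> P"
  using complete_min[OF ds_compat[OF assms(1-3)] assms(4)] .

lemma inter_max:
  assumes "dipath_space G" "P \<in> G" "Q \<in> G" "Field P \<inter> Field Q \<noteq> {}"
  shows "\<exists>i\<in>Field P \<inter> Field Q. \<forall>y\<in>Field P \<inter> Field Q. (y, i) \<in> P"
  using complete_max[OF ds_compat[OF assms(1-3)] assms(4)] .

lemma seg_mem: "(u, v) \<in> segment P x y \<longleftrightarrow> (u, v) \<in> P \<and> (x, u) \<in> P \<and> (u, y) \<in> P \<and> (x, v) \<in> P \<and> (v, y) \<in> P"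
  unfolding segment_def Let_def by (auto simp: Field_def)

lemma seg_field:
  assumes "is_path P"
  shows "Field (segment P x y) = {z. (x, z) \<in> P \<and> (z, y) \<in> P}"
proof (intro set_eqI iffI)
  fix z assume "z \<in> Field (segment P x y)"
  then obtain w where "(z, w) \<in> segment P x y \<or> (w, z) \<in> segment P x y"
    unfolding Field_def by blast
  then show "z \<in> {z. (x, z) \<in> P \<and> (z, y) \<in> P}" unfolding seg_mem by blast
next
  fix z assume "z \<in> {z. (x, z) \<in> P \<and> (z, y) \<in> P}"
  then have xz: "(x, z) \<in> P" and zy: "(z, y) \<in> P" by auto
  then have "z \<in> Field P" using field_mem[OF xz] by blast
  then have "(z, z) \<in> P" using path_refl[OF assms] by blast
  then have "(z, z) \<in> segment P x y" unfolding seg_mem using xz zy by blast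
  then show "z \<in> Field (segment P x y)" unfolding Field_def by blast
qed

lemma seg_sub: "segment P x y \<subseteq> P"
  unfolding segment_def Let_def by (rule Int_lower1)

lemma seg_field_sub: "Field (segment P x y) \<subseteq> Field P"
  using seg_sub[of P x y] unfolding Field_def by blast

lemma seg_min:
  assumes "is_path P" "(x, y) \<in> P" shows "is_min (segment P x y) x"
proof -
  have "x \<in> Field P" using field_mem[OF assms(2)] by blast
  then have xx: "(x, x) \<in> P" using path_refl[OF assms(1)] by blast
  show ?thesis unfolding is_min_def seg_field[OF assms(1)]
    using xx assms(2) by (auto simp: seg_mem)
qed

lemma seg_max:
  assumes "is_path P" "(x, y) \<in> P" shows "is_max (segment P x y) y"
proof -
  have "y \<in> Field P" using field_mem[OF assms(2)] by blast
  then have yy: "(y, y) \<in> P" using path_refl[OF assms(1)] by blast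
  show ?thesis unfolding is_max_def seg_field[OF assms(1)]
    using yy assms(2) by (auto simp: seg_mem)
qed

lemma concat_in:
  assumes "dipath_space G" "P \<in> G" "Q \<in> G" "Field P \<inter> Field Q = {x}" "is_max P x" "is_min Q x"
  shows "concat P Q \<in> G"
proof -
  have cl: "\<forall>P\<in>G. \<forall>Q\<in>G. connects P Q \<longrightarrow> concat P Q \<in> G"
    using assms(1) unfolding dipath_space_def by (elim conjE)
  have "connects P Q" unfolding connects_def using assms(4-6) by blast
  then show ?thesis using cl assms(2,3) by blast
qed

lemma field_times: "A \<noteq> {} \<Longrightarrow> B \<noteq> {} \<Longrightarrow> Field (A \<times> B) = A \<union> B"
  unfolding Field_def by blast

lemma concat_field:
  assumes "x \<in> Field P" "x \<in> Field Q"
  shows "Field (concat P Q) = Field P \<union> Field Q"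
proof -
  have "Field (concat P Q) = Field P \<union> Field Q \<union> Field (Field P \<times> Field Q)"
    unfolding concat_def Field_Un by blast
  also have "\<dots> = Field P \<union> Field Q" using field_times[of "Field P" "Field Q"] assms by blast
  finally show ?thesis .
qed

lemma concat_min:
  assumes "is_min P a" "x \<in> Field P" "x \<in> Field Q"
  shows "is_min (concat P Q) a"
  unfolding is_min_def concat_field[OF assms(2,3)]
proof (intro conjI ballI)
  show "a \<in> Field P \<union> Field Q" using assms(1) unfolding is_min_def by blast
  fix z assume "z \<in> Field P \<union> Field Q"
  moreover have "a \<in> Field P" using assms(1) unfolding is_min_def by blast
  ultimately show "(a, z) \<in> concat P Q" using assms(1) unfolding is_min_def concat_def by blast
qed

lemma concat_max:
  assumes "is_max Q b" "x \<in> Field P" "x \<in> Field Q"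
  shows "is_max (concat P Q) b"
  unfolding is_max_def concat_field[OF assms(2,3)]
proof (intro conjI ballI)
  show "b \<in> Field P \<union> Field Q" using assms(1) unfolding is_max_def by blast
  fix z assume "z \<in> Field P \<union> Field Q"
  moreover have "b \<in> Field Q" using assms(1) unfolding is_max_def by blast
  ultimately show "(z, b) \<in> concat P Q" using assms(1) unfolding is_max_def concat_def by blast
qed

lemma concat_sub1: "P \<subseteq> concat P Q"
  unfolding concat_def by blast

lemma concat_sub2: "Q \<subseteq> concat P Q"
  unfolding concat_def by blast

section \<open>Minima of finite unions\<close>

definition least_in :: "'a rel \<Rightarrow> 'a set \<Rightarrow> 'a \<Rightarrow> bool" where
  "least_in r S m \<longleftrightarrow> m \<in> S \<and> (\<forall>y\<in>S. (m, y) \<in> r)"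

lemma least_in_Un:
  assumes tot: "\<forall>x\<in>D. \<forall>y\<in>D. (x, y) \<in> r \<or> (y, x) \<in> r"
    and tr: "trans r" and "S \<subseteq> D" "T \<subseteq> D" "least_in r S a" "least_in r T b"
  shows "\<exists>m. least_in r (S \<union> T) m"
proof -
  have ab: "a \<in> D" "b \<in> D" using assms(3-6) unfolding least_in_def by blast+
  have "(a, b) \<in> r \<or> (b, a) \<in> r" using tot ab by blast
  then show ?thesis
  proof
    assume h: "(a, b) \<in> r"
    have "least_in r (S \<union> T) a"
      unfolding least_in_def
    proof (intro conjI ballI)
      show "a \<in> S \<union> T" using assms(5) unfolding least_in_def by blast
      fix y assume "y \<in> S \<union> T"
      then show "(a, y) \<in> r"
      proof
        assume "y \<in> S" then show ?thesis using assms(5) unfolding least_in_def by blast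
      next
        assume "y \<in> T" then have "(b, y) \<in> r" using assms(6) unfolding least_in_def by blast
        then show ?thesis using transD[OF tr h] by blast
      qed
    qed
    then show ?thesis by blast
  next
    assume h: "(b, a) \<in> r"
    have "least_in r (S \<union> T) b"
      unfolding least_in_def
    proof (intro conjI ballI)
      show "b \<in> S \<union> T" using assms(6) unfolding least_in_def by blast
      fix y assume "y \<in> S \<union> T"
      then show "(b, y) \<in> r"
      proof
        assume "y \<in> T" then show ?thesis using assms(6) unfolding least_in_def by blast
      next
        assume "y \<in> S" then have "(a, y) \<in> r" using assms(5) unfolding least_in_def by blast
        then show ?thesis using transD[OF tr h] by blast
      qed
    qed
    then show ?thesis by blast
  qed
qed

lemma minU_aux:
  assumes tot: "\<forall>x\<in>D. \<forall>y\<in>D. (x, y) \<in> r \<or> (y, x) \<in> r"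
    and tr: "trans r"
    and fin: "finite I"
  shows "(\<forall>i\<in>I. S i \<subseteq> D) \<longrightarrow> (\<forall>i\<in>I. S i \<noteq> {} \<longrightarrow> (\<exists>m. least_in r (S i) m)) \<longrightarrow>
     (\<Union>i\<in>I. S i) \<noteq> {} \<longrightarrow> (\<exists>m. least_in r (\<Union>i\<in>I. S i) m)"
  using fin
proof (induction I rule: finite_induct)
  case empty
  then show ?case by simp
next
  case (insert j I)
  show ?case
  proof (intro impI)
    assume sub: "\<forall>i\<in>insert j I. S i \<subseteq> D"
      and mins: "\<forall>i\<in>insert j I. S i \<noteq> {} \<longrightarrow> (\<exists>m. least_in r (S i) m)"
      and ne: "(\<Union>i\<in>insert j I. S i) \<noteq> {}"
    have eq: "(\<Union>i\<in>insert j I. S i) = S j \<union> (\<Union>i\<in>I. S i)" by blast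
    have subI: "\<forall>i\<in>I. S i \<subseteq> D" using sub by blast
    have minsI: "\<forall>i\<in>I. S i \<noteq> {} \<longrightarrow> (\<exists>m. least_in r (S i) m)" using mins by blast
    have subU: "(\<Union>i\<in>I. S i) \<subseteq> D" using subI by blast
    have subj: "S j \<subseteq> D" using sub by blast
    show "\<exists>m. least_in r (\<Union>i\<in>insert j I. S i) m"
    proof (cases "(\<Union>i\<in>I. S i) = {}")
      case True
      then have "S j \<noteq> {}" using ne eq by simp
      then obtain m where "least_in r (S j) m" using mins by blast
      moreover have eq3: "(\<Union>i\<in>insert j I. S i) = S j" using eq True by simp
      ultimately show ?thesis unfolding eq3 by blast
    next
      case False
      then obtain m where m: "least_in r (\<Union>i\<in>I. S i) m" using insert.IH subI minsI by blast
      show ?thesis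
      proof (cases "S j = {}")
        case True
        then have eq2: "(\<Union>i\<in>insert j I. S i) = (\<Union>i\<in>I. S i)" using eq by simp
        show ?thesis unfolding eq2 using m by blast
      next
        case False
        then obtain m' where m': "least_in r (S j) m'" using mins by blast
        show ?thesis unfolding eq using least_in_Un[OF tot tr subj subU m' m] .
      qed
    qed
  qed
qed

lemma minU:
  assumes tot: "\<forall>x\<in>D. \<forall>y\<in>D. (x, y) \<in> r \<or> (y, x) \<in> r"
    and tr: "trans r"
    and fin: "finite I"
    and sub: "\<forall>i\<in>I. S i \<subseteq> D"
    and mins: "\<forall>i\<in>I. S i \<noteq> {} \<longrightarrow> (\<exists>m\<in>S i. \<forall>y\<in>S i. (m, y) \<in> r)"
    and ne: "(\<Union>i\<in>I. S i) \<noteq> {}"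
  shows "\<exists>m\<in>(\<Union>i\<in>I. S i). \<forall>y\<in>(\<Union>i\<in>I. S i). (m, y) \<in> r"
proof -
  have "\<forall>i\<in>I. S i \<noteq> {} \<longrightarrow> (\<exists>m. least_in r (S i) m)" using mins unfolding least_in_def by blast
  then have "\<exists>m. least_in r (\<Union>i\<in>I. S i) m" using minU_aux[OF tot tr fin] sub ne by blast
  then show ?thesis unfolding least_in_def by blast
qed

lemma path_minU:
  assumes "is_path R" "finite I" "\<forall>i\<in>I. S i \<subseteq> Field R"
    "\<forall>i\<in>I. S i \<noteq> {} \<longrightarrow> (\<exists>m\<in>S i. \<forall>y\<in>S i. (m, y) \<in> R)" "(\<Union>i\<in>I. S i) \<noteq> {}"
  shows "\<exists>m\<in>(\<Union>i\<in>I. S i). \<forall>y\<in>(\<Union>i\<in>I. S i). (m, y) \<in> R"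
proof -
  have tot: "\<forall>x\<in>Field R. \<forall>y\<in>Field R. (x, y) \<in> R \<or> (y, x) \<in> R"
    using path_total[OF assms(1)] by blast
  have tr: "trans R" by (rule transI) (rule path_trans[OF assms(1)])
  show ?thesis by (rule minU[OF tot tr assms(2-5)])
qed

lemma path_maxU:
  assumes "is_path R" "finite I" "\<forall>i\<in>I. S i \<subseteq> Field R"
    "\<forall>i\<in>I. S i \<noteq> {} \<longrightarrow> (\<exists>m\<in>S i. \<forall>y\<in>S i. (y, m) \<in> R)" "(\<Union>i\<in>I. S i) \<noteq> {}"
  shows "\<exists>m\<in>(\<Union>i\<in>I. S i). \<forall>y\<in>(\<Union>i\<in>I. S i). (y, m) \<in> R"
proof -
  have tot: "\<forall>x\<in>Field R. \<forall>y\<in>Field R. (x, y) \<in> R\<inverse> \<or> (y, x) \<in> R\<inverse>"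
    using path_total[OF assms(1)] by blast
  have tr: "trans (R\<inverse>)" by (rule transI) (auto intro: path_trans[OF assms(1)])
  have m4: "\<forall>i\<in>I. S i \<noteq> {} \<longrightarrow> (\<exists>m\<in>S i. \<forall>y\<in>S i. (m, y) \<in> R\<inverse>)"
    using assms(4) by simp
  have "\<exists>m\<in>(\<Union>i\<in>I. S i). \<forall>y\<in>(\<Union>i\<in>I. S i). (m, y) \<in> R\<inverse>"
    by (rule minU[OF tot tr assms(2,3) m4 assms(5)])
  then show ?thesis by simp
qed

lemma finite_max:
  assumes "is_path R" "finite S" "S \<subseteq> Field R" "S \<noteq> {}"
  shows "\<exists>m\<in>S. \<forall>y\<in>S. (y, m) \<in> R"
proof -
  have "\<exists>m\<in>(\<Union>i\<in>S. {i}). \<forall>y\<in>(\<Union>i\<in>S. {i}). (y, m) \<in> R"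
    apply (rule path_maxU[OF assms(1,2)])
    using assms(3,4) path_refl[OF assms(1)] by (auto simp: subset_iff)
  then show ?thesis by simp
qed

lemma finite_min:
  assumes "is_path R" "finite S" "S \<subseteq> Field R" "S \<noteq> {}"
  shows "\<exists>m\<in>S. \<forall>y\<in>S. (m, y) \<in> R"
proof -
  have "\<exists>m\<in>(\<Union>i\<in>S. {i}). \<forall>y\<in>(\<Union>i\<in>S. {i}). (m, y) \<in> R"
    apply (rule path_minU[OF assms(1,2)])
    using assms(3,4) path_refl[OF assms(1)] by (auto simp: subset_iff)
  then show ?thesis by simp
qed



definition piece :: "'a rel set \<Rightarrow> 'a set \<Rightarrow> 'a set \<Rightarrow> 'a set \<Rightarrow> 'a rel \<Rightarrow> 'a \<Rightarrow> 'a \<Rightarrow> bool" where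
  "piece G A B V F u v \<longleftrightarrow> F \<in> G \<and> is_min F u \<and> is_max F v \<and> Field F \<inter> V \<subseteq> {u, v} \<and>
     finite (Field F \<inter> A) \<and> finite (Field F \<inter> B)"

definition pwalk :: "'a rel set \<Rightarrow> 'a set \<Rightarrow> 'a set \<Rightarrow> 'a rel set \<Rightarrow> nat \<Rightarrow> (nat \<Rightarrow> 'a rel) \<Rightarrow>
    (nat \<Rightarrow> 'a rel) \<Rightarrow> (nat \<Rightarrow> 'a) \<Rightarrow> (nat \<Rightarrow> 'a) \<Rightarrow> bool" where
  "pwalk G A B PP m F Q z w \<longleftrightarrow> w 0 \<in> A \<and> w 0 \<notin> vertices PP \<and>
     (\<forall>i\<le>m. piece G A B (vertices PP) (F i) (w i) (z (Suc i))) \<and>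
     (\<forall>i. 0 < i \<and> i \<le> m \<longrightarrow> Q i \<in> PP \<and> (w i, z i) \<in> Q i \<and> w i \<noteq> z i)"

definition walk :: "'a rel set \<Rightarrow> 'a set \<Rightarrow> 'a set \<Rightarrow> 'a rel set \<Rightarrow> nat \<Rightarrow> (nat \<Rightarrow> 'a rel) \<Rightarrow>
    (nat \<Rightarrow> 'a rel) \<Rightarrow> (nat \<Rightarrow> 'a) \<Rightarrow> (nat \<Rightarrow> 'a) \<Rightarrow> bool" where
  "walk G A B PP m F Q z w \<longleftrightarrow> pwalk G A B PP m F Q z w \<and> z (Suc m) \<in> B \<and> z (Suc m) \<notin> vertices PP"

definition gpath :: "'a rel set \<Rightarrow> 'a set \<Rightarrow> 'a set \<Rightarrow> 'a rel \<Rightarrow> bool" where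
  "gpath G A B P \<longleftrightarrow> P \<in> G \<and> (\<exists>s e. is_min P s \<and> s \<in> A \<and> is_max P e \<and> e \<in> B) \<and>
     finite (Field P \<inter> A) \<and> finite (Field P \<inter> B)"

definition linkage :: "'a rel set \<Rightarrow> 'a set \<Rightarrow> 'a set \<Rightarrow> 'a rel set \<Rightarrow> bool" where
  "linkage G A B PP \<longleftrightarrow> finite PP \<and> (\<forall>P\<in>PP. gpath G A B P) \<and>
     (\<forall>P\<in>PP. \<forall>Q\<in>PP. P \<noteq> Q \<longrightarrow> Field P \<inter> Field Q = {})"

lemma AB_gpath:
  assumes "AB_path G A B R" shows "gpath G A B R"
proof -
  obtain m M where "R \<in> G" "is_min R m" "Field R \<inter> A = {m}" "is_max R M" "Field R \<inter> B = {M}"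
    using assms unfolding AB_path_def by blast
  then show ?thesis unfolding gpath_def by auto
qed

lemma trim:
  assumes G: "dipath_space G" and gp: "gpath G A B P"
  shows "\<exists>R. AB_path G A B R \<and> Field R \<subseteq> Field P"
proof -
  obtain s e where PG: "P \<in> G" and s: "is_min P s" "s \<in> A" and e: "is_max P e" "e \<in> B"
    and fA: "finite (Field P \<inter> A)" and fB: "finite (Field P \<inter> B)"
    using gp unfolding gpath_def by blast
  have pP: "is_path P" using ds_path[OF G PG] .
  have "s \<in> Field P \<inter> A" using s unfolding is_min_def by blast
  then obtain a where a: "a \<in> Field P \<inter> A" and amax: "\<forall>y\<in>Field P \<inter> A. (y, a) \<in> P"
    using finite_max[OF pP fA] by blast
  have ae: "(a, e) \<in> P" using e a unfolding is_max_def by blast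
  define B' where "B' = {u \<in> Field P \<inter> B. (a, u) \<in> P}"
  have fB': "finite B'" unfolding B'_def using fB by (rule rev_finite_subset) blast
  have "e \<in> B'" unfolding B'_def using ae e unfolding is_max_def by blast
  then obtain b where b: "b \<in> B'" and bmin: "\<forall>y\<in>B'. (b, y) \<in> P"
    using finite_min[OF pP fB'] unfolding B'_def by blast
  have ab: "(a, b) \<in> P" using b unfolding B'_def by blast
  define R where "R = segment P a b"
  have RG: "R \<in> G" unfolding R_def by (rule ds_seg[OF G PG ab])
  have Rmin: "is_min R a" unfolding R_def by (rule seg_min[OF pP ab])
  have Rmax: "is_max R b" unfolding R_def by (rule seg_max[OF pP ab])
  have FR: "Field R = {z. (a, z) \<in> P \<and> (z, b) \<in> P}" unfolding R_def by (rule seg_field[OF pP])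
  have RA: "Field R \<inter> A = {a}"
  proof
    show "Field R \<inter> A \<subseteq> {a}"
    proof
      fix z assume z: "z \<in> Field R \<inter> A"
      then have az: "(a, z) \<in> P" using FR by blast
      then have "z \<in> Field P" using field_mem[OF az] by blast
      then have "(z, a) \<in> P" using amax z by blast
      then show "z \<in> {a}" using path_antisym[OF pP az] by blast
    qed
    show "{a} \<subseteq> Field R \<inter> A" using Rmin a unfolding is_min_def by blast
  qed
  have RB: "Field R \<inter> B = {b}"
  proof
    show "Field R \<inter> B \<subseteq> {b}"
    proof
      fix z assume z: "z \<in> Field R \<inter> B"
      then have az: "(a, z) \<in> P" and zb: "(z, b) \<in> P" using FR by blast+
      then have "z \<in> Field P" using field_mem[OF az] by blast
      then have "z \<in> B'" unfolding B'_def using z az by blast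
      then have "(b, z) \<in> P" using bmin by blast
      then show "z \<in> {b}" using path_antisym[OF pP zb] by blast
    qed
    show "{b} \<subseteq> Field R \<inter> B" using Rmax b unfolding is_max_def B'_def by blast
  qed
  have "AB_path G A B R" unfolding AB_path_def using RG Rmin Rmax RA RB by blast
  moreover have "Field R \<subseteq> Field P" unfolding R_def by (rule seg_field_sub)
  ultimately show ?thesis by blast
qed

lemma linkage_to_AB:
  assumes G: "dipath_space G" and L: "linkage G A B PP"
  shows "\<exists>RR. RR \<subseteq> G \<and> finite RR \<and> card RR = card PP \<and> (\<forall>R\<in>RR. AB_path G A B R) \<and>
            (\<forall>P\<in>RR. \<forall>Q\<in>RR. P \<noteq> Q \<longrightarrow> Field P \<inter> Field Q = {})"
proof -
  have fin: "finite PP" and gp: "\<forall>P\<in>PP. gpath G A B P"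
    and dis: "\<forall>P\<in>PP. \<forall>Q\<in>PP. P \<noteq> Q \<longrightarrow> Field P \<inter> Field Q = {}"
    using L unfolding linkage_def by blast+
  define f where "f P = (SOME R. AB_path G A B R \<and> Field R \<subseteq> Field P)" for P
  have fP: "AB_path G A B (f P) \<and> Field (f P) \<subseteq> Field P" if "P \<in> PP" for P
  proof -
    have "\<exists>R. AB_path G A B R \<and> Field R \<subseteq> Field P" using trim[OF G] gp that by blast
    then show ?thesis unfolding f_def by (rule someI_ex)
  qed
  have ne: "Field (f P) \<noteq> {}" if PPP: "P \<in> PP" for P
  proof -
    obtain m where "is_min (f P) m" using fP[OF PPP] unfolding AB_path_def by blast
    then show ?thesis unfolding is_min_def by blast
  qed
  have inj: "inj_on f PP"
  proof (rule inj_onI)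
    fix P Q assume PQ: "P \<in> PP" "Q \<in> PP" "f P = f Q"
    show "P = Q"
    proof (rule ccontr)
      assume "P \<noteq> Q"
      then have "Field P \<inter> Field Q = {}" using dis PQ by blast
      moreover have "Field (f P) \<subseteq> Field P" "Field (f P) \<subseteq> Field Q" using fP PQ by metis+
      ultimately show False using ne[OF PQ(1)] by blast
    qed
  qed
  show ?thesis
  proof (intro exI conjI)
    show "f ` PP \<subseteq> G" using fP unfolding AB_path_def by blast
    show "finite (f ` PP)" using fin by simp
    show "card (f ` PP) = card PP" using card_image[OF inj] .
    show "\<forall>R\<in>f ` PP. AB_path G A B R" using fP by blast
    show "\<forall>P\<in>f ` PP. \<forall>Q\<in>f ` PP. P \<noteq> Q \<longrightarrow> Field P \<inter> Field Q = {}"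
    proof (intro ballI impI)
      fix P' Q' assume "P' \<in> f ` PP" "Q' \<in> f ` PP" "P' \<noteq> Q'"
      then obtain P Q where PQ: "P \<in> PP" "Q \<in> PP" "P' = f P" "Q' = f Q" "P \<noteq> Q" by blast
      then have "Field P \<inter> Field Q = {}" using dis by blast
      moreover have "Field (f P) \<subseteq> Field P" "Field (f Q) \<subseteq> Field Q" using fP PQ(1,2) by blast+
      ultimately show "Field P' \<inter> Field Q' = {}" using PQ(3,4) by blast
    qed
  qed
qed



lemma vert_sub: "P \<in> PP \<Longrightarrow> Field P \<subseteq> vertices PP"
  unfolding vertices_def by blast

lemma vert_iff: "u \<in> vertices PP \<longleftrightarrow> (\<exists>P\<in>PP. u \<in> Field P)"
  unfolding vertices_def by blast

lemma walk_pwalk: "walk G A B PP m F Q z w \<Longrightarrow> pwalk G A B PP m F Q z w"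
  unfolding walk_def by blast

lemma pwalk_piece: "pwalk G A B PP m F Q z w \<Longrightarrow> i \<le> m \<Longrightarrow> piece G A B (vertices PP) (F i) (w i) (z (Suc i))"
  unfolding pwalk_def by blast

lemma pwalk_back: "pwalk G A B PP m F Q z w \<Longrightarrow> 0 < i \<Longrightarrow> i \<le> m \<Longrightarrow> Q i \<in> PP \<and> (w i, z i) \<in> Q i \<and> w i \<noteq> z i"
  unfolding pwalk_def by blast

lemma pwalk_start: "pwalk G A B PP m F Q z w \<Longrightarrow> w 0 \<in> A \<and> w 0 \<notin> vertices PP"
  unfolding pwalk_def by blast

lemma pwalk_zV: "pwalk G A B PP m F Q z w \<Longrightarrow> 0 < i \<Longrightarrow> i \<le> m \<Longrightarrow> z i \<in> vertices PP"
proof -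
  assume a: "pwalk G A B PP m F Q z w" "0 < i" "i \<le> m"
  then have "Q i \<in> PP" "(w i, z i) \<in> Q i" using pwalk_back[OF a] by blast+
  then show ?thesis using field_mem[of "w i" "z i" "Q i"] vert_sub[of "Q i" PP] by blast
qed

lemma piece_G: "piece G A B V F u v \<Longrightarrow> F \<in> G" unfolding piece_def by blast
lemma piece_min: "piece G A B V F u v \<Longrightarrow> is_min F u" unfolding piece_def by blast
lemma piece_max: "piece G A B V F u v \<Longrightarrow> is_max F v" unfolding piece_def by blast
lemma piece_V: "piece G A B V F u v \<Longrightarrow> Field F \<inter> V \<subseteq> {u, v}" unfolding piece_def by blast
lemma piece_fin: "piece G A B V F u v \<Longrightarrow> finite (Field F \<inter> A) \<and> finite (Field F \<inter> B)"
  unfolding piece_def by blast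

section \<open>Shortcuts\<close>

lemma shortcut_b:
  assumes W: "walk G A B PP m F Q z w" and i: "i < m"
    and pc: "piece G A B (vertices PP) Fn (w i) (z (Suc m))"
  shows "walk G A B PP i (F(i := Fn)) Q (z(Suc i := z (Suc m))) w"
proof -
  have pw: "pwalk G A B PP m F Q z w" using walk_pwalk[OF W] .
  have st: "w 0 \<in> A \<and> w 0 \<notin> vertices PP" using pwalk_start[OF pw] .
  have pcs: "\<forall>j\<le>i. piece G A B (vertices PP) ((F(i := Fn)) j) (w j) ((z(Suc i := z (Suc m))) (Suc j))"
  proof (intro allI impI)
    fix j assume j: "j \<le> i"
    show "piece G A B (vertices PP) ((F(i := Fn)) j) (w j) ((z(Suc i := z (Suc m))) (Suc j))"
    proof (cases "j = i")
      case True
      then show ?thesis using pc by simp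
    next
      case False
      then have "j \<le> m" using j i by simp
      then show ?thesis using pwalk_piece[OF pw] False by simp
    qed
  qed
  have bks: "\<forall>j. 0 < j \<and> j \<le> i \<longrightarrow> Q j \<in> PP \<and> (w j, (z(Suc i := z (Suc m))) j) \<in> Q j \<and> w j \<noteq> (z(Suc i := z (Suc m))) j"
  proof (intro allI impI)
    fix j assume j: "0 < j \<and> j \<le> i"
    then have "j \<noteq> Suc i" "j \<le> m" using i by simp_all
    then show "Q j \<in> PP \<and> (w j, (z(Suc i := z (Suc m))) j) \<in> Q j \<and> w j \<noteq> (z(Suc i := z (Suc m))) j"
      using pwalk_back[OF pw] j by simp
  qed
  have en: "z (Suc m) \<in> B \<and> z (Suc m) \<notin> vertices PP" using W unfolding walk_def by blast
  show ?thesis unfolding walk_def pwalk_def using st pcs bks en by simp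
qed

lemma shortcut_a:
  assumes W: "walk G A B PP m F Q z w" and i: "0 < i" "i < m"
    and bk: "(w m, z i) \<in> Q i" "w m \<noteq> z i"
  shows "walk G A B PP i (F(i := F m)) Q (z(Suc i := z (Suc m))) (w(i := w m))"
proof -
  have pw: "pwalk G A B PP m F Q z w" using walk_pwalk[OF W] .
  have st: "(w(i := w m)) 0 \<in> A \<and> (w(i := w m)) 0 \<notin> vertices PP" using pwalk_start[OF pw] i by simp
  have pcs: "\<forall>j\<le>i. piece G A B (vertices PP) ((F(i := F m)) j) ((w(i := w m)) j) ((z(Suc i := z (Suc m))) (Suc j))"
  proof (intro allI impI)
    fix j assume j: "j \<le> i"
    show "piece G A B (vertices PP) ((F(i := F m)) j) ((w(i := w m)) j) ((z(Suc i := z (Suc m))) (Suc j))"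
    proof (cases "j = i")
      case True
      then show ?thesis using pwalk_piece[OF pw, of m] by simp
    next
      case False
      then have "j \<le> m" using j i by simp
      then show ?thesis using pwalk_piece[OF pw] False by simp
    qed
  qed
  have bks: "\<forall>j. 0 < j \<and> j \<le> i \<longrightarrow> Q j \<in> PP \<and> ((w(i := w m)) j, (z(Suc i := z (Suc m))) j) \<in> Q j \<and> (w(i := w m)) j \<noteq> (z(Suc i := z (Suc m))) j"
  proof (intro allI impI)
    fix j assume j: "0 < j \<and> j \<le> i"
    then have "j \<noteq> Suc i" "j \<le> m" using i by simp_all
    then show "Q j \<in> PP \<and> ((w(i := w m)) j, (z(Suc i := z (Suc m))) j) \<in> Q j \<and> (w(i := w m)) j \<noteq> (z(Suc i := z (Suc m))) j"
      using pwalk_back[OF pw] j bk by (cases "j = i") simp_all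
  qed
  have en: "z (Suc m) \<in> B \<and> z (Suc m) \<notin> vertices PP" using W unfolding walk_def by blast
  show ?thesis unfolding walk_def pwalk_def using st pcs bks en by simp
qed



lemma min_b:
  assumes G: "dipath_space G" and W: "walk G A B PP m F Q z w" and i: "i < m"
    and mn: "\<forall>m'<m. \<forall>F' Q' z' w'. \<not> walk G A B PP m' F' Q' z' w'"
    and p: "p \<in> Field (F i) \<inter> Field (F m)"
  shows "p = z (Suc i) \<and> z (Suc i) = w m"
proof -
  define V where "V = vertices PP"
  have pw: "pwalk G A B PP m F Q z w" using walk_pwalk[OF W] .
  have pci: "piece G A B V (F i) (w i) (z (Suc i))" using pwalk_piece[OF pw] i unfolding V_def by simp
  have pcm: "piece G A B V (F m) (w m) (z (Suc m))" using pwalk_piece[OF pw] unfolding V_def by simp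
  have FiG: "F i \<in> G" using piece_G[OF pci] .
  have FmG: "F m \<in> G" using piece_G[OF pcm] .
  have pi: "is_path (F i)" using ds_path[OF G FiG] .
  have pm: "is_path (F m)" using ds_path[OF G FmG] .
  have bV: "z (Suc m) \<notin> V" using W unfolding walk_def V_def by blast
  have zV: "z (Suc i) \<in> V" using pwalk_zV[OF pw] i unfolding V_def by simp
  have ne: "Field (F i) \<inter> Field (F m) \<noteq> {}" using p by blast
  obtain q where q: "q \<in> Field (F i) \<inter> Field (F m)" and qmin: "\<forall>y\<in>Field (F i) \<inter> Field (F m). (q, y) \<in> F i"
    using inter_min[OF G FiG FmG ne] by blast
  have maxi: "is_max (F i) (z (Suc i))" using piece_max[OF pci] .
  have mini: "is_min (F i) (w i)" using piece_min[OF pci] .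
  have maxm: "is_max (F m) (z (Suc m))" using piece_max[OF pcm] .
  have minm: "is_min (F m) (w m)" using piece_min[OF pcm] .
  have qz: "q = z (Suc i)"
  proof (rule ccontr)
    assume qne: "q \<noteq> z (Suc i)"
    have wq: "(w i, q) \<in> F i" using mini q unfolding is_min_def by blast
    have qb: "(q, z (Suc m)) \<in> F m" using maxm q unfolding is_max_def by blast
    define S1 where "S1 = segment (F i) (w i) q"
    define S2 where "S2 = segment (F m) q (z (Suc m))"
    have S1G: "S1 \<in> G" unfolding S1_def by (rule ds_seg[OF G FiG wq])
    have S2G: "S2 \<in> G" unfolding S2_def by (rule ds_seg[OF G FmG qb])
    have FS1: "Field S1 = {y. (w i, y) \<in> F i \<and> (y, q) \<in> F i}" unfolding S1_def by (rule seg_field[OF pi])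
    have FS2: "Field S2 = {y. (q, y) \<in> F m \<and> (y, z (Suc m)) \<in> F m}" unfolding S2_def by (rule seg_field[OF pm])
    have S1max: "is_max S1 q" unfolding S1_def by (rule seg_max[OF pi wq])
    have S1min: "is_min S1 (w i)" unfolding S1_def by (rule seg_min[OF pi wq])
    have S2min: "is_min S2 q" unfolding S2_def by (rule seg_min[OF pm qb])
    have S2max: "is_max S2 (z (Suc m))" unfolding S2_def by (rule seg_max[OF pm qb])
    have qS1: "q \<in> Field S1" using S1max unfolding is_max_def by blast
    have qS2: "q \<in> Field S2" using S2min unfolding is_min_def by blast
    have int: "Field S1 \<inter> Field S2 = {q}"
    proof
      show "Field S1 \<inter> Field S2 \<subseteq> {q}"
      proof
        fix u assume u: "u \<in> Field S1 \<inter> Field S2"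
        then have uq: "(u, q) \<in> F i" using FS1 by blast
        have "u \<in> Field (F i)" using field_mem[OF uq] by blast
        moreover have "u \<in> Field (F m)" using u FS2 field_mem[of q u "F m"] by blast
        ultimately have "(q, u) \<in> F i" using qmin by blast
        then show "u \<in> {q}" using path_antisym[OF pi uq] by blast
      qed
      show "{q} \<subseteq> Field S1 \<inter> Field S2" using qS1 qS2 by blast
    qed
    define Fn where "Fn = concat S1 S2"
    have FnG: "Fn \<in> G" unfolding Fn_def by (rule concat_in[OF G S1G S2G int S1max S2min])
    have Fnmin: "is_min Fn (w i)" unfolding Fn_def by (rule concat_min[OF S1min qS1 qS2])
    have Fnmax: "is_max Fn (z (Suc m))" unfolding Fn_def by (rule concat_max[OF S2max qS1 qS2])
    have FFn: "Field Fn = Field S1 \<union> Field S2" unfolding Fn_def by (rule concat_field[OF qS1 qS2])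
    have S1sub: "Field S1 \<subseteq> Field (F i)" unfolding S1_def by (rule seg_field_sub)
    have S2sub: "Field S2 \<subseteq> Field (F m)" unfolding S2_def by (rule seg_field_sub)
    have Vi: "Field (F i) \<inter> V \<subseteq> {w i, z (Suc i)}" using piece_V[OF pci] .
    have Vm: "Field (F m) \<inter> V \<subseteq> {w m, z (Suc m)}" using piece_V[OF pcm] .
    have FnV: "Field Fn \<inter> V \<subseteq> {w i, z (Suc m)}"
    proof
      fix u assume u: "u \<in> Field Fn \<inter> V"
      then have "u \<in> Field S1 \<or> u \<in> Field S2" using FFn by blast
      then show "u \<in> {w i, z (Suc m)}"
      proof
        assume uS1: "u \<in> Field S1"
        then have "u \<in> {w i, z (Suc i)}" using S1sub Vi u by blast
        moreover have "u \<noteq> z (Suc i)"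
        proof
          assume uz: "u = z (Suc i)"
          have "(u, q) \<in> F i" using uS1 FS1 by blast
          moreover have "(q, z (Suc i)) \<in> F i" using maxi q unfolding is_max_def by blast
          ultimately show False using path_antisym[OF pi] uz qne by blast
        qed
        ultimately show ?thesis by blast
      next
        assume uS2: "u \<in> Field S2"
        then have "u \<in> {w m, z (Suc m)}" using S2sub Vm u by blast
        moreover have "u = w m \<Longrightarrow> u = w i"
        proof -
          assume uw: "u = w m"
          have "(q, u) \<in> F m" using uS2 FS2 by blast
          moreover have "(u, q) \<in> F m" using minm q uw unfolding is_min_def by blast
          ultimately have "q = u" using path_antisym[OF pm] by blast
          then have "q \<in> Field (F i) \<inter> V" using q u by blast
          then have "q \<in> {w i, z (Suc i)}" using Vi by blast
          then show "u = w i" using qne \<open>q = u\<close> by blast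
        qed
        ultimately show ?thesis by blast
      qed
    qed
    have finA: "finite (Field Fn \<inter> A)"
    proof -
      have "Field Fn \<inter> A \<subseteq> (Field (F i) \<inter> A) \<union> (Field (F m) \<inter> A)" using FFn S1sub S2sub by blast
      then show ?thesis using piece_fin[OF pci] piece_fin[OF pcm] by (meson finite_UnI rev_finite_subset)
    qed
    have finB: "finite (Field Fn \<inter> B)"
    proof -
      have "Field Fn \<inter> B \<subseteq> (Field (F i) \<inter> B) \<union> (Field (F m) \<inter> B)" using FFn S1sub S2sub by blast
      then show ?thesis using piece_fin[OF pci] piece_fin[OF pcm] by (meson finite_UnI rev_finite_subset)
    qed
    have "piece G A B (vertices PP) Fn (w i) (z (Suc m))"
      unfolding piece_def using FnG Fnmin Fnmax FnV finA finB unfolding V_def by blast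
    then have "walk G A B PP i (F(i := Fn)) Q (z(Suc i := z (Suc m))) w"
      by (rule shortcut_b[OF W i])
    then show False using mn i by blast
  qed
  have pz: "p = z (Suc i)"
  proof -
    have "(q, p) \<in> F i" using qmin p by blast
    moreover have "(p, z (Suc i)) \<in> F i" using maxi p unfolding is_max_def by blast
    ultimately show ?thesis using path_antisym[OF pi] qz by blast
  qed
  have "q \<in> Field (F m) \<inter> V" using q qz zV by blast
  then have "q \<in> {w m, z (Suc m)}" using piece_V[OF pcm] by blast
  then have "q = w m" using bV qz zV by auto
  then show ?thesis using pz qz by auto
qed

lemma min_a:
  assumes G: "dipath_space G" and W: "walk G A B PP m F Q z w" and i: "0 < i" "i < m"
    and mn: "\<forall>m'<m. \<forall>F' Q' z' w'. \<not> walk G A B PP m' F' Q' z' w'"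
    and QP: "Q i = Q m"
    and L: "linkage G A B PP"
  shows "(z i, w m) \<in> Q m"
proof (rule ccontr)
  assume nz: "(z i, w m) \<notin> Q m"
  have pw: "pwalk G A B PP m F Q z w" using walk_pwalk[OF W] .
  have bm: "Q m \<in> PP \<and> (w m, z m) \<in> Q m \<and> w m \<noteq> z m" using pwalk_back[OF pw] i by simp
  have bi: "Q i \<in> PP \<and> (w i, z i) \<in> Q i \<and> w i \<noteq> z i" using pwalk_back[OF pw] i by simp
  have QG: "Q m \<in> G" using bm L unfolding linkage_def gpath_def by blast
  have pQ: "is_path (Q m)" using ds_path[OF G QG] .
  have "z i \<in> Field (Q m)" using bi QP field_mem[of "w i" "z i" "Q i"] by simp
  moreover have "w m \<in> Field (Q m)" using bm field_mem[of "w m" "z m" "Q m"] by blast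
  ultimately have "(w m, z i) \<in> Q m" using path_total[OF pQ] nz by blast
  moreover have "w m \<noteq> z i" using nz path_refl[OF pQ \<open>z i \<in> Field (Q m)\<close>] by auto
  ultimately have "walk G A B PP i (F(i := F m)) Q (z(Suc i := z (Suc m))) (w(i := w m))"
    using shortcut_a[OF W i] QP by simp
  then show False using mn i by blast
qed



lemma augment_step:
  assumes G: "dipath_space G" and L: "linkage G A B PP" and W: "walk G A B PP m F Q z w"
    and mk: "m = Suc k"
    and mn: "\<forall>m'<m. \<forall>F' Q' z' w'. \<not> walk G A B PP m' F' Q' z' w'"
  shows "\<exists>PP2 F2 Q2 z2. linkage G A B PP2 \<and> card PP2 = card PP \<and> walk G A B PP2 k F2 Q2 z2 w"
proof -
  define V where "V = vertices PP"
  have pw: "pwalk G A B PP m F Q z w" using walk_pwalk[OF W] .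
  have finPP: "finite PP" and gpP: "\<forall>P\<in>PP. gpath G A B P"
    and dis: "\<forall>P\<in>PP. \<forall>Q\<in>PP. P \<noteq> Q \<longrightarrow> Field P \<inter> Field Q = {}"
    using L unfolding linkage_def by blast+
  define P where "P = Q m"
  have bm: "P \<in> PP" "(w m, z m) \<in> P" "w m \<noteq> z m" using pwalk_back[OF pw, of m] mk unfolding P_def by simp_all
  obtain sP eP where sP: "is_min P sP" "sP \<in> A" and eP: "is_max P eP" "eP \<in> B"
    and PG: "P \<in> G" using gpP bm(1) unfolding gpath_def by blast
  have pP: "is_path P" using ds_path[OF G PG] .
  have PV: "Field P \<subseteq> V" unfolding V_def by (rule vert_sub[OF bm(1)])
  have pcm: "piece G A B V (F m) (w m) (z (Suc m))" using pwalk_piece[OF pw] unfolding V_def by simp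
  have FmG: "F m \<in> G" using piece_G[OF pcm] .
  have bV: "z (Suc m) \<notin> V" "z (Suc m) \<in> B" using W unfolding walk_def V_def by blast+
  have Vm: "Field (F m) \<inter> V \<subseteq> {w m, z (Suc m)}" using piece_V[OF pcm] .
  have minm: "is_min (F m) (w m)" using piece_min[OF pcm] .
  have maxm: "is_max (F m) (z (Suc m))" using piece_max[OF pcm] .
  have wmP: "w m \<in> Field P" using field_mem[OF bm(2)] by blast
  have zmP: "z m \<in> Field P" using field_mem[OF bm(2)] by blast
  have wmF: "w m \<in> Field (F m)" using minm unfolding is_min_def by blast
  have a: "\<And>i. 0 < i \<Longrightarrow> i < m \<Longrightarrow> Q i = P \<Longrightarrow> (z i, w m) \<in> P"
    using min_a[OF G W _ _ mn _ L] unfolding P_def by blast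
  have b: "\<And>i p. i < m \<Longrightarrow> p \<in> Field (F i) \<inter> Field (F m) \<Longrightarrow> p = z (Suc i) \<and> z (Suc i) = w m"
    using min_b[OF G W _ mn] by blast
  have swm: "(sP, w m) \<in> P" using sP wmP unfolding is_min_def by blast
  define P1 where "P1 = segment P sP (w m)"
  have P1G: "P1 \<in> G" unfolding P1_def by (rule ds_seg[OF G PG swm])
  have FP1: "Field P1 = {y. (sP, y) \<in> P \<and> (y, w m) \<in> P}" unfolding P1_def by (rule seg_field[OF pP])
  have P1sub: "Field P1 \<subseteq> Field P" unfolding P1_def by (rule seg_field_sub)
  have P1max: "is_max P1 (w m)" unfolding P1_def by (rule seg_max[OF pP swm])
  have P1min: "is_min P1 sP" unfolding P1_def by (rule seg_min[OF pP swm])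
  have wmP1: "w m \<in> Field P1" using P1max unfolding is_max_def by blast
  have int1: "Field P1 \<inter> Field (F m) = {w m}"
  proof
    show "Field P1 \<inter> Field (F m) \<subseteq> {w m}"
    proof
      fix u assume u: "u \<in> Field P1 \<inter> Field (F m)"
      then have "u \<in> Field (F m) \<inter> V" using P1sub PV by blast
      then have "u \<in> {w m, z (Suc m)}" using Vm by blast
      moreover have "u \<in> V" using u P1sub PV by blast
      ultimately show "u \<in> {w m}" using bV(1) by auto
    qed
    show "{w m} \<subseteq> Field P1 \<inter> Field (F m)" using wmP1 wmF by blast
  qed
  define P2 where "P2 = concat P1 (F m)"
  have P2G: "P2 \<in> G" unfolding P2_def by (rule concat_in[OF G P1G FmG int1 P1max minm])
  have FP2: "Field P2 = Field P1 \<union> Field (F m)" unfolding P2_def by (rule concat_field[OF wmP1 wmF])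
  have P2min: "is_min P2 sP" unfolding P2_def by (rule concat_min[OF P1min wmP1 wmF])
  have P2max: "is_max P2 (z (Suc m))" unfolding P2_def by (rule concat_max[OF maxm wmP1 wmF])
  have P1P2: "P1 \<subseteq> P2" unfolding P2_def by (rule concat_sub1)
  have gP: "gpath G A B P" using gpP bm(1) by blast
  have gP2: "gpath G A B P2"
  proof -
    have fA: "finite (Field P2 \<inter> A)"
    proof -
      have "Field P2 \<inter> A \<subseteq> (Field P \<inter> A) \<union> (Field (F m) \<inter> A)" using FP2 P1sub by blast
      then show ?thesis using gP piece_fin[OF pcm] unfolding gpath_def by (meson finite_UnI rev_finite_subset)
    qed
    have fB: "finite (Field P2 \<inter> B)"
    proof -
      have "Field P2 \<inter> B \<subseteq> (Field P \<inter> B) \<union> (Field (F m) \<inter> B)" using FP2 P1sub by blast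
      then show ?thesis using gP piece_fin[OF pcm] unfolding gpath_def by (meson finite_UnI rev_finite_subset)
    qed
    show ?thesis unfolding gpath_def using P2G P2min P2max sP(2) bV(2) fA fB by blast
  qed
  have disP2: "\<forall>Q'\<in>PP - {P}. Field P2 \<inter> Field Q' = {}"
  proof
    fix Q' assume Q': "Q' \<in> PP - {P}"
    then have dPQ: "Field P \<inter> Field Q' = {}" using dis bm(1) by blast
    have Q'V: "Field Q' \<subseteq> V" unfolding V_def using Q' vert_sub[of Q' PP] by blast
    show "Field P2 \<inter> Field Q' = {}"
    proof (rule ccontr)
      assume "Field P2 \<inter> Field Q' \<noteq> {}"
      then obtain u where u: "u \<in> Field P2" "u \<in> Field Q'" by blast
      then have "u \<in> Field P1 \<or> u \<in> Field (F m)" using FP2 by blast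
      then show False
      proof
        assume "u \<in> Field P1" then show False using P1sub dPQ u by blast
      next
        assume "u \<in> Field (F m)"
        then have "u \<in> {w m, z (Suc m)}" using Vm Q'V u by blast
        then show False using wmP dPQ bV(1) Q'V u by blast
      qed
    qed
  qed
  define PP2 where "PP2 = insert P2 (PP - {P})"
  have P2notin: "P2 \<notin> PP - {P}"
  proof
    assume "P2 \<in> PP - {P}"
    then have "Field P2 \<inter> Field P2 = {}" using disP2 by blast
    moreover have "sP \<in> Field P2" using P2min unfolding is_min_def by blast
    ultimately show False by blast
  qed
  have cardPP2: "card PP2 = card PP"
  proof -
    have "card PP2 = Suc (card (PP - {P}))" unfolding PP2_def using finPP P2notin by simp
    also have "\<dots> = card PP" by (rule card_Suc_Diff1[OF finPP bm(1)])
    finally show ?thesis .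
  qed
  have L2: "linkage G A B PP2"
    unfolding linkage_def PP2_def
  proof (intro conjI)
    show "finite (insert P2 (PP - {P}))" using finPP by simp
    show "\<forall>P\<in>insert P2 (PP - {P}). gpath G A B P" using gP2 gpP by blast
    show "\<forall>Pa\<in>insert P2 (PP - {P}). \<forall>Q\<in>insert P2 (PP - {P}). Pa \<noteq> Q \<longrightarrow> Field Pa \<inter> Field Q = {}"
      using disP2 dis by blast
  qed
  define V2 where "V2 = vertices PP2"
  have V2sub: "V2 \<subseteq> V \<union> Field (F m)"
  proof
    fix u assume "u \<in> V2"
    then obtain R where R: "R \<in> PP2" "u \<in> Field R" unfolding V2_def vertices_def by blast
    show "u \<in> V \<union> Field (F m)"
    proof (cases "R = P2")
      case True
      then show ?thesis using R FP2 P1sub PV by blast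
    next
      case False
      then have "R \<in> PP" using R unfolding PP2_def by blast
      then show ?thesis using R vert_sub[of R PP] unfolding V_def by blast
    qed
  qed
  have noV: "\<And>u. u \<in> Field P \<Longrightarrow> (z m, u) \<in> P \<Longrightarrow> u \<notin> V2"
  proof
    fix u assume uP: "u \<in> Field P" and zu: "(z m, u) \<in> P" and uV2: "u \<in> V2"
    obtain R where R: "R \<in> PP2" "u \<in> Field R" using uV2 unfolding V2_def vertices_def by blast
    show False
    proof (cases "R = P2")
      case False
      then have "R \<in> PP - {P}" using R unfolding PP2_def by blast
      then show False using dis bm(1) R uP by blast
    next
      case True
      then have "u \<in> Field P1 \<or> u \<in> Field (F m)" using R FP2 by blast
      then show False
      proof
        assume "u \<in> Field P1"
        then have "(u, w m) \<in> P" using FP1 by blast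
        then have "(z m, w m) \<in> P" using path_trans[OF pP zu] by blast
        then show False using path_antisym[OF pP bm(2)] bm(3) by blast
      next
        assume uF: "u \<in> Field (F m)"
        then have "u \<in> {w m, z (Suc m)}" using Vm uP PV by blast
        moreover have "u \<noteq> z (Suc m)" using bV(1) uP PV by blast
        ultimately have "u = w m" by blast
        then have "(z m, w m) \<in> P" using zu by simp
        then show False using path_antisym[OF pP bm(2)] bm(3) by blast
      qed
    qed
  qed
  have zme: "(z m, eP) \<in> P" using eP zmP unfolding is_max_def by blast
  define S where "S = segment P (z m) eP"
  have SG: "S \<in> G" unfolding S_def by (rule ds_seg[OF G PG zme])
  have FS: "Field S = {y. (z m, y) \<in> P \<and> (y, eP) \<in> P}" unfolding S_def by (rule seg_field[OF pP])
  have Ssub: "Field S \<subseteq> Field P" unfolding S_def by (rule seg_field_sub)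
  have Smin: "is_min S (z m)" unfolding S_def by (rule seg_min[OF pP zme])
  have Smax: "is_max S eP" unfolding S_def by (rule seg_max[OF pP zme])
  have zmS: "z m \<in> Field S" using Smin unfolding is_min_def by blast
  have km: "k < m" using mk by simp
  have pck: "piece G A B V (F k) (w k) (z m)" using pwalk_piece[OF pw, of k] mk unfolding V_def by simp
  have FkG: "F k \<in> G" using piece_G[OF pck] .
  have Vk: "Field (F k) \<inter> V \<subseteq> {w k, z m}" using piece_V[OF pck] .
  have mink: "is_min (F k) (w k)" using piece_min[OF pck] .
  have maxk: "is_max (F k) (z m)" using piece_max[OF pck] .
  have zmFk: "z m \<in> Field (F k)" using maxk unfolding is_max_def by blast
  have wkS: "w k \<notin> Field S"
  proof
    assume wS: "w k \<in> Field S"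
    then have wkP: "w k \<in> Field P" using Ssub by blast
    have zw: "(z m, w k) \<in> P" using wS FS by blast
    show False
    proof (cases "k = 0")
      case True
      then show False using pwalk_start[OF pw] wkP PV unfolding V_def by auto
    next
      case False
      then have k0: "0 < k" by simp
      have bk: "Q k \<in> PP" "(w k, z k) \<in> Q k" using pwalk_back[OF pw, of k] k0 km by simp_all
      show False
      proof (cases "Q k = P")
        case False
        then have "Field (Q k) \<inter> Field P = {}" using dis bk(1) bm(1) by blast
        moreover have "w k \<in> Field (Q k)" using field_mem[OF bk(2)] by blast
        ultimately show False using wkP by blast
      next
        case True
        have "(z k, w m) \<in> P" using a[OF k0 km True] .
        moreover have "(w k, z k) \<in> P" using bk(2) True by simp
        ultimately have "(w k, w m) \<in> P" using path_trans[OF pP] by blast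
        then have "(w k, z m) \<in> P" using path_trans[OF pP _ bm(2)] by blast
        then have "w k = z m" using path_antisym[OF pP _ zw] by blast
        then have "(z m, w m) \<in> P" using \<open>(w k, w m) \<in> P\<close> by simp
        then show False using path_antisym[OF pP bm(2)] bm(3) by blast
      qed
    qed
  qed
  have int2: "Field (F k) \<inter> Field S = {z m}"
  proof
    show "Field (F k) \<inter> Field S \<subseteq> {z m}"
    proof
      fix u assume u: "u \<in> Field (F k) \<inter> Field S"
      then have "u \<in> V" using Ssub PV by blast
      then have "u \<in> {w k, z m}" using Vk u by blast
      then show "u \<in> {z m}" using wkS u by blast
    qed
    show "{z m} \<subseteq> Field (F k) \<inter> Field S" using zmFk zmS by blast
  qed
  define NF where "NF = concat (F k) S"
  have NFG: "NF \<in> G" unfolding NF_def by (rule concat_in[OF G FkG SG int2 maxk Smin])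
  have FNF: "Field NF = Field (F k) \<union> Field S" unfolding NF_def by (rule concat_field[OF zmFk zmS])
  have NFmin: "is_min NF (w k)" unfolding NF_def by (rule concat_min[OF mink zmFk zmS])
  have NFmax: "is_max NF eP" unfolding NF_def by (rule concat_max[OF Smax zmFk zmS])
  have zmV2: "z m \<notin> V2" using noV[OF zmP] path_refl[OF pP zmP] by blast
  have SV2: "Field S \<inter> V2 = {}" using noV FS Ssub by blast
  have NFV: "Field NF \<inter> V2 \<subseteq> {w k, eP}"
  proof
    fix u assume u: "u \<in> Field NF \<inter> V2"
    then have "u \<in> Field (F k)" using FNF SV2 by blast
    moreover have "u \<in> V \<union> Field (F m)" using u V2sub by blast
    ultimately have "u \<in> {w k, z m}" using Vk b[OF km, of u] mk by auto
    then show "u \<in> {w k, eP}" using zmV2 u by blast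
  qed
  have pcNF: "piece G A B V2 NF (w k) eP"
  proof -
    have fA: "finite (Field NF \<inter> A)"
    proof -
      have "Field NF \<inter> A \<subseteq> (Field (F k) \<inter> A) \<union> (Field P \<inter> A)" using FNF Ssub by blast
      then show ?thesis using gP piece_fin[OF pck] unfolding gpath_def by (meson finite_UnI rev_finite_subset)
    qed
    have fB: "finite (Field NF \<inter> B)"
    proof -
      have "Field NF \<inter> B \<subseteq> (Field (F k) \<inter> B) \<union> (Field P \<inter> B)" using FNF Ssub by blast
      then show ?thesis using gP piece_fin[OF pck] unfolding gpath_def by (meson finite_UnI rev_finite_subset)
    qed
    show ?thesis unfolding piece_def using NFG NFmin NFmax NFV fA fB by blast
  qed
  define F2 where "F2 = F(k := NF)"
  define Q2 where "Q2 = (\<lambda>j. if Q j = P then P2 else Q j)"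
  define z2 where "z2 = z(m := eP)"
  have st2: "w 0 \<in> A \<and> w 0 \<notin> V2"
  proof -
    have w0: "w 0 \<in> A" "w 0 \<notin> V" using pwalk_start[OF pw] unfolding V_def by blast+
    have "w 0 \<notin> Field (F m)"
    proof
      assume "w 0 \<in> Field (F m)"
      moreover have "w 0 \<in> Field (F 0)" using piece_min[OF pwalk_piece[OF pw, of 0]] unfolding is_min_def by blast
      ultimately have "w 0 = z (Suc 0)" using b[of 0 "w 0"] mk by blast
      moreover have "z (Suc 0) \<in> V" using pwalk_zV[OF pw, of "Suc 0"] mk unfolding V_def by simp
      ultimately show False using w0 by simp
    qed
    then show ?thesis using w0 V2sub by blast
  qed
  have pcs2: "\<forall>j\<le>k. piece G A B V2 (F2 j) (w j) (z2 (Suc j))"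
  proof (intro allI impI)
    fix j assume j: "j \<le> k"
    show "piece G A B V2 (F2 j) (w j) (z2 (Suc j))"
    proof (cases "j = k")
      case True
      then show ?thesis using pcNF unfolding F2_def z2_def using mk by simp
    next
      case False
      then have jk: "j < k" using j by simp
      then have jm: "j < m" "Suc j \<noteq> m" using mk by simp_all
      have pcj: "piece G A B V (F j) (w j) (z (Suc j))" using pwalk_piece[OF pw, of j] jm unfolding V_def by simp
      have "Field (F j) \<inter> V2 \<subseteq> {w j, z (Suc j)}"
      proof
        fix u assume u: "u \<in> Field (F j) \<inter> V2"
        then have "u \<in> V \<or> u \<in> Field (F m)" using V2sub by blast
        then show "u \<in> {w j, z (Suc j)}"
        proof
          assume "u \<in> V" then show ?thesis using piece_V[OF pcj] u by blast
        next
          assume "u \<in> Field (F m)" then show ?thesis using b[OF jm(1), of u] u by blast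
        qed
      qed
      then have "piece G A B V2 (F j) (w j) (z (Suc j))"
        using pcj unfolding piece_def by blast
      then show ?thesis unfolding F2_def z2_def using False jm by simp
    qed
  qed
  have bks2: "\<forall>j. 0 < j \<and> j \<le> k \<longrightarrow> Q2 j \<in> PP2 \<and> (w j, z2 j) \<in> Q2 j \<and> w j \<noteq> z2 j"
  proof (intro allI impI)
    fix j assume j: "0 < j \<and> j \<le> k"
    then have jm: "j < m" "j \<noteq> m" using mk by simp_all
    have bj: "Q j \<in> PP" "(w j, z j) \<in> Q j" "w j \<noteq> z j" using pwalk_back[OF pw, of j] j jm by simp_all
    have z2j: "z2 j = z j" unfolding z2_def using jm by simp
    show "Q2 j \<in> PP2 \<and> (w j, z2 j) \<in> Q2 j \<and> w j \<noteq> z2 j"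
    proof (cases "Q j = P")
      case False
      then show ?thesis using bj z2j unfolding Q2_def PP2_def by simp
    next
      case True
      have zw: "(z j, w m) \<in> P" using a[of j] j jm True by blast
      have wz: "(w j, z j) \<in> P" using bj(2) True by simp
      have wjP: "w j \<in> Field P" "z j \<in> Field P" using field_mem[OF wz] by blast+
      have "(sP, w j) \<in> P" "(sP, z j) \<in> P" using sP wjP unfolding is_min_def by blast+
      moreover have "(w j, w m) \<in> P" using path_trans[OF pP wz zw] .
      ultimately have "(w j, z j) \<in> P1" unfolding P1_def seg_mem using wz zw by blast
      then have "(w j, z j) \<in> P2" using P1P2 by blast
      then show ?thesis using bj z2j True unfolding Q2_def PP2_def by simp
    qed
  qed
  have en2: "z2 (Suc k) \<in> B \<and> z2 (Suc k) \<notin> V2"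
    using eP(2) noV[of eP] zme field_mem[OF zme] unfolding z2_def using mk by simp
  have "walk G A B PP2 k F2 Q2 z2 w"
    unfolding walk_def pwalk_def using st2 pcs2 bks2 en2 unfolding V2_def by blast
  then show ?thesis using L2 cardPP2 by blast
qed



lemma augment_base:
  assumes L: "linkage G A B PP" and W: "walk G A B PP 0 F Q z w"
  shows "\<exists>PP'. linkage G A B PP' \<and> card PP' = Suc (card PP)"
proof -
  define V where "V = vertices PP"
  have pw: "pwalk G A B PP 0 F Q z w" using walk_pwalk[OF W] .
  have pc: "piece G A B V (F 0) (w 0) (z (Suc 0))" using pwalk_piece[OF pw, of 0] unfolding V_def by simp
  have st: "w 0 \<in> A" "w 0 \<notin> V" using pwalk_start[OF pw] unfolding V_def by blast+
  have en: "z (Suc 0) \<in> B" "z (Suc 0) \<notin> V" using W unfolding walk_def V_def by simp_all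
  have FV: "Field (F 0) \<inter> V = {}" using piece_V[OF pc] st en by blast
  have finPP: "finite PP" and gpP: "\<forall>P\<in>PP. gpath G A B P"
    and dis: "\<forall>P\<in>PP. \<forall>Q\<in>PP. P \<noteq> Q \<longrightarrow> Field P \<inter> Field Q = {}"
    using L unfolding linkage_def by blast+
  have gF: "gpath G A B (F 0)"
    unfolding gpath_def using piece_G[OF pc] piece_min[OF pc] piece_max[OF pc] piece_fin[OF pc] st en by blast
  have w0F: "w 0 \<in> Field (F 0)" using piece_min[OF pc] unfolding is_min_def by blast
  have disF: "\<forall>Q\<in>PP. Field (F 0) \<inter> Field Q = {}"
    using FV vert_sub[of _ PP] unfolding V_def by blast
  have notin: "F 0 \<notin> PP" using disF w0F by blast
  have "linkage G A B (insert (F 0) PP)"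
    unfolding linkage_def using finPP gF gpP dis disF by auto
  moreover have "card (insert (F 0) PP) = Suc (card PP)" using finPP notin by simp
  ultimately show ?thesis by blast
qed

lemma augment:
  assumes G: "dipath_space G"
  shows "linkage G A B PP \<Longrightarrow> walk G A B PP m F Q z w \<Longrightarrow> \<exists>PP'. linkage G A B PP' \<and> card PP' = Suc (card PP)"
proof (induction m arbitrary: PP F Q z w rule: less_induct)
  case (less m)
  show ?case
  proof (cases "\<exists>m'<m. \<exists>F' Q' z' w'. walk G A B PP m' F' Q' z' w'")
    case True
    then obtain m' F' Q' z' w' where "m' < m" "walk G A B PP m' F' Q' z' w'" by blast
    then show ?thesis using less.IH less.prems(1) by blast
  next
    case False
    then have mn: "\<forall>m'<m. \<forall>F' Q' z' w'. \<not> walk G A B PP m' F' Q' z' w'" by blast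
    show ?thesis
    proof (cases m)
      case 0
      then show ?thesis using augment_base less.prems by blast
    next
      case (Suc k)
      obtain PP2 F2 Q2 z2 where "linkage G A B PP2" "card PP2 = card PP" "walk G A B PP2 k F2 Q2 z2 w"
        using augment_step[OF G less.prems(1) less.prems(2) Suc mn] by blast
      moreover have "k < m" using Suc by simp
      ultimately show ?thesis using less.IH by metis
    qed
  qed
qed



definition Ent :: "'a rel set \<Rightarrow> 'a set \<Rightarrow> 'a set \<Rightarrow> 'a rel set \<Rightarrow> 'a set" where
  "Ent G A B PP = {e. e \<in> vertices PP \<and> (\<exists>m F Q z w. pwalk G A B PP m F Q z w \<and> z (Suc m) = e)}"

definition smin :: "'a rel \<Rightarrow> 'a" where
  "smin P = (SOME s. is_min P s)"

definition xpt :: "'a rel set \<Rightarrow> 'a set \<Rightarrow> 'a set \<Rightarrow> 'a rel set \<Rightarrow> 'a rel \<Rightarrow> 'a" where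
  "xpt G A B PP P = (if Ent G A B PP \<inter> Field P \<noteq> {} then (SOME s. is_sup P (Ent G A B PP \<inter> Field P) s) else smin P)"

lemma smin_eq:
  assumes pP: "is_path P" and sm: "is_min P s" shows "smin P = s"
proof -
  have "is_min P (SOME s. is_min P s)" by (rule someI[of "is_min P", OF sm])
  then show ?thesis unfolding smin_def using is_min_unique[OF pP _ sm] by blast
qed

lemma xpt_props:
  assumes pP: "is_path P" and sm: "is_min P s"
  shows "xpt G A B PP P \<in> Field P"
    and "\<And>e. e \<in> Ent G A B PP \<inter> Field P \<Longrightarrow> (e, xpt G A B PP P) \<in> P"
    and "\<And>t. t \<in> Field P \<Longrightarrow> (t, xpt G A B PP P) \<in> P \<Longrightarrow> t \<noteq> xpt G A B PP P \<Longrightarrow>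
            \<exists>e\<in>Ent G A B PP \<inter> Field P. (t, e) \<in> P \<and> t \<noteq> e"
proof -
  define Z where "Z = Ent G A B PP \<inter> Field P"
  have ssm: "smin P = s" using smin_eq[OF pP sm] .
  have sF: "s \<in> Field P" using sm unfolding is_min_def by blast
  have supex: "\<exists>x. is_sup P Z x" if "Z \<noteq> {}"
  proof -
    have "complete_in P (Field P)" using pP unfolding is_path_def by (elim conjE)
    then have cc: "\<forall>Z. Z \<noteq> {} \<and> Z \<subseteq> Field P \<longrightarrow> (\<exists>s. is_sup P Z s \<and> s \<in> Field P) \<and> (\<exists>i. is_inf P Z i \<and> i \<in> Field P)"
      unfolding complete_in_def by (elim conjE)
    have "Z \<subseteq> Field P" unfolding Z_def by blast
    then have "(\<exists>s. is_sup P Z s \<and> s \<in> Field P)" using cc that by blast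
    then show ?thesis by blast
  qed
  have supx: "is_sup P Z (xpt G A B PP P)" if "Z \<noteq> {}"
  proof -
    have "xpt G A B PP P = (SOME x. is_sup P Z x)" unfolding xpt_def Z_def using that Z_def by simp
    then show ?thesis using someI_ex[OF supex[OF that]] by simp
  qed
  have emp: "xpt G A B PP P = s" if "Z = {}"
    unfolding xpt_def using that ssm unfolding Z_def by simp
  show "xpt G A B PP P \<in> Field P"
  proof (cases "Z = {}")
    case True then show ?thesis using emp sF by simp
  next
    case False then show ?thesis using supx unfolding is_sup_def by blast
  qed
  show "\<And>e. e \<in> Ent G A B PP \<inter> Field P \<Longrightarrow> (e, xpt G A B PP P) \<in> P"
  proof -
    fix e assume "e \<in> Ent G A B PP \<inter> Field P"
    then have "e \<in> Z" "Z \<noteq> {}" unfolding Z_def by blast+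
    then show "(e, xpt G A B PP P) \<in> P" using supx unfolding is_sup_def by blast
  qed
  show "\<And>t. t \<in> Field P \<Longrightarrow> (t, xpt G A B PP P) \<in> P \<Longrightarrow> t \<noteq> xpt G A B PP P \<Longrightarrow>
            \<exists>e\<in>Ent G A B PP \<inter> Field P. (t, e) \<in> P \<and> t \<noteq> e"
  proof -
    fix t assume tF: "t \<in> Field P" and tx: "(t, xpt G A B PP P) \<in> P" and tne: "t \<noteq> xpt G A B PP P"
    show "\<exists>e\<in>Ent G A B PP \<inter> Field P. (t, e) \<in> P \<and> t \<noteq> e"
    proof (cases "Z = {}")
      case True
      then have "xpt G A B PP P = s" using emp by simp
      moreover have "(s, t) \<in> P" using sm tF unfolding is_min_def by blast
      ultimately have "(t, s) \<in> P" "(s, t) \<in> P" using tx by simp_all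
      then have "t = s" using path_antisym[OF pP] by blast
      then show ?thesis using tne \<open>xpt G A B PP P = s\<close> by simp
    next
      case False
      show ?thesis
      proof (rule ccontr)
        assume nex: "\<not> (\<exists>e\<in>Ent G A B PP \<inter> Field P. (t, e) \<in> P \<and> t \<noteq> e)"
        have ub: "\<forall>e\<in>Z. (e, t) \<in> P"
        proof
          fix e assume eZ: "e \<in> Z"
          then have eF: "e \<in> Field P" unfolding Z_def by blast
          show "(e, t) \<in> P"
          proof (cases "(t, e) \<in> P")
            case True
            then have "t = e" using nex eZ unfolding Z_def by blast
            then show ?thesis using path_refl[OF pP tF] by simp
          next
            case False
            then show ?thesis using path_total[OF pP tF eF] by blast
          qed
        qed
        have "(xpt G A B PP P, t) \<in> P" using supx[OF False] ub tF unfolding is_sup_def by blast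
        then show False using path_antisym[OF pP tx] tne by blast
      qed
    qed
  qed
qed

lemma pwalk_ext:
  assumes pw: "pwalk G A B PP m F Q z w" and P: "P \<in> PP" and te: "(t, z (Suc m)) \<in> P" "t \<noteq> z (Suc m)"
    and pc: "piece G A B (vertices PP) Fn t v"
  shows "pwalk G A B PP (Suc m) (F(Suc m := Fn)) (Q(Suc m := P)) (z(Suc (Suc m) := v)) (w(Suc m := t))"
proof -
  have st: "(w(Suc m := t)) 0 \<in> A \<and> (w(Suc m := t)) 0 \<notin> vertices PP" using pwalk_start[OF pw] by simp
  have pcs: "\<forall>j\<le>Suc m. piece G A B (vertices PP) ((F(Suc m := Fn)) j) ((w(Suc m := t)) j) ((z(Suc (Suc m) := v)) (Suc j))"
  proof (intro allI impI)
    fix j assume j: "j \<le> Suc m"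
    show "piece G A B (vertices PP) ((F(Suc m := Fn)) j) ((w(Suc m := t)) j) ((z(Suc (Suc m) := v)) (Suc j))"
    proof (cases "j = Suc m")
      case True then show ?thesis using pc by simp
    next
      case False
      then have "j \<le> m" using j by simp
      then show ?thesis using pwalk_piece[OF pw] False by simp
    qed
  qed
  have bks: "\<forall>j. 0 < j \<and> j \<le> Suc m \<longrightarrow> (Q(Suc m := P)) j \<in> PP \<and> ((w(Suc m := t)) j, (z(Suc (Suc m) := v)) j) \<in> (Q(Suc m := P)) j \<and> (w(Suc m := t)) j \<noteq> (z(Suc (Suc m) := v)) j"
  proof (intro allI impI)
    fix j assume j: "0 < j \<and> j \<le> Suc m"
    show "(Q(Suc m := P)) j \<in> PP \<and> ((w(Suc m := t)) j, (z(Suc (Suc m) := v)) j) \<in> (Q(Suc m := P)) j \<and> (w(Suc m := t)) j \<noteq> (z(Suc (Suc m) := v)) j"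
    proof (cases "j = Suc m")
      case True then show ?thesis using P te by simp
    next
      case False
      then have "j \<le> m" using j by simp
      then show ?thesis using pwalk_back[OF pw, of j] False j by simp
    qed
  qed
  show ?thesis unfolding pwalk_def using st pcs bks by blast
qed

lemma pwalk_zero:
  assumes "a \<in> A" "a \<notin> vertices PP" "piece G A B (vertices PP) Fn a v"
  shows "pwalk G A B PP 0 (\<lambda>_. Fn) Q (\<lambda>_. v) (\<lambda>_. a)"
  unfolding pwalk_def using assms by simp



definition smax :: "'a rel \<Rightarrow> 'a" where
  "smax P = (SOME s. is_max P s)"

lemma smax_eq:
  assumes pP: "is_path P" and sm: "is_max P s" shows "smax P = s"
proof -
  have "is_max P (SOME s. is_max P s)" by (rule someI[of "is_max P", OF sm])
  then show ?thesis unfolding smax_def using is_max_unique[OF pP _ sm] by blast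
qed

lemma AB_props:
  assumes G: "dipath_space G" and AB: "AB_path G A B R"
  shows "R \<in> G \<and> is_path R \<and> is_min R (smin R) \<and> Field R \<inter> A = {smin R} \<and>
         is_max R (smax R) \<and> Field R \<inter> B = {smax R}"
proof -
  obtain m M where RG: "R \<in> G" and m: "is_min R m" "Field R \<inter> A = {m}"
    and M: "is_max R M" "Field R \<inter> B = {M}" using AB unfolding AB_path_def by blast
  have pR: "is_path R" using ds_path[OF G RG] .
  have "smin R = m" using smin_eq[OF pR m(1)] .
  moreover have "smax R = M" using smax_eq[OF pR M(1)] .
  ultimately show ?thesis using RG pR m M by simp
qed



lemma separate:
  assumes G: "dipath_space G" and fin: "finite PP"
    and ab: "\<forall>P\<in>PP. AB_path G A B P"
    and dis: "\<forall>P\<in>PP. \<forall>Q\<in>PP. P \<noteq> Q \<longrightarrow> Field P \<inter> Field Q = {}"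
    and nowalk: "\<forall>m F Q z w. \<not> walk G A B PP m F Q z w"
    and R: "AB_path G A B R"
  shows "(xpt G A B PP ` PP) \<inter> Field R \<noteq> {}"
proof
  assume XR: "(xpt G A B PP ` PP) \<inter> Field R = {}"
  define V where "V = vertices PP"
  define E where "E = Ent G A B PP"
  define x where "x = xpt G A B PP"
  define C where "C P = segment P (smin P) (x P)" for P
  define D where "D P = segment P (x P) (smax P)" for P
  have xR: "\<And>P. P \<in> PP \<Longrightarrow> x P \<notin> Field R" using XR unfolding x_def by blast
  have Pp: "\<And>P. P \<in> PP \<Longrightarrow> P \<in> G \<and> is_path P \<and> is_min P (smin P) \<and> Field P \<inter> A = {smin P} \<and>
         is_max P (smax P) \<and> Field P \<inter> B = {smax P}"
    using AB_props[OF G] ab by blast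
  have pPP: "\<And>P. P \<in> PP \<Longrightarrow> is_path P" using Pp by blast
  have mPP: "\<And>P. P \<in> PP \<Longrightarrow> is_min P (smin P)" using Pp by blast
  have GPP: "\<And>P. P \<in> PP \<Longrightarrow> P \<in> G" using Pp by blast
  have xF: "\<And>P. P \<in> PP \<Longrightarrow> x P \<in> Field P"
  proof -
    fix P assume P: "P \<in> PP"
    show "x P \<in> Field P" unfolding x_def by (rule xpt_props(1)[OF pPP[OF P] mPP[OF P]])
  qed
  have xE: "\<And>P e. P \<in> PP \<Longrightarrow> e \<in> E \<Longrightarrow> e \<in> Field P \<Longrightarrow> (e, x P) \<in> P"
  proof -
    fix P e assume P: "P \<in> PP" and e: "e \<in> E" "e \<in> Field P"
    show "(e, x P) \<in> P" unfolding x_def by (rule xpt_props(2)[OF pPP[OF P] mPP[OF P]]) (use e in \<open>simp add: E_def\<close>)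
  qed
  have xS: "\<And>P t. P \<in> PP \<Longrightarrow> t \<in> Field P \<Longrightarrow> (t, x P) \<in> P \<Longrightarrow> t \<noteq> x P \<Longrightarrow> \<exists>e\<in>E \<inter> Field P. (t, e) \<in> P \<and> t \<noteq> e"
  proof -
    fix P t assume P: "P \<in> PP" and t: "t \<in> Field P" "(t, x P) \<in> P" "t \<noteq> x P"
    show "\<exists>e\<in>E \<inter> Field P. (t, e) \<in> P \<and> t \<noteq> e"
      unfolding E_def by (rule xpt_props(3)[OF pPP[OF P] mPP[OF P]]) (use t in \<open>simp_all add: x_def\<close>)
  qed
  have sx: "\<And>P. P \<in> PP \<Longrightarrow> (smin P, x P) \<in> P"
  proof -
    fix P assume P: "P \<in> PP"
    show "(smin P, x P) \<in> P" using mPP[OF P] xF[OF P] unfolding is_min_def by blast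
  qed
  have xe: "\<And>P. P \<in> PP \<Longrightarrow> (x P, smax P) \<in> P"
  proof -
    fix P assume P: "P \<in> PP"
    have "is_max P (smax P)" using Pp[OF P] by blast
    then show "(x P, smax P) \<in> P" using xF[OF P] unfolding is_max_def by blast
  qed
  have CG: "\<And>P. P \<in> PP \<Longrightarrow> C P \<in> G"
  proof -
    fix P assume P: "P \<in> PP"
    show "C P \<in> G" unfolding C_def by (rule ds_seg[OF G GPP[OF P] sx[OF P]])
  qed
  have DG: "\<And>P. P \<in> PP \<Longrightarrow> D P \<in> G"
  proof -
    fix P assume P: "P \<in> PP"
    show "D P \<in> G" unfolding D_def by (rule ds_seg[OF G GPP[OF P] xe[OF P]])
  qed
  have FC: "\<And>P. P \<in> PP \<Longrightarrow> Field (C P) = {y. (smin P, y) \<in> P \<and> (y, x P) \<in> P}"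
  proof -
    fix P assume P: "P \<in> PP"
    show "Field (C P) = {y. (smin P, y) \<in> P \<and> (y, x P) \<in> P}" unfolding C_def by (rule seg_field[OF pPP[OF P]])
  qed
  have FD: "\<And>P. P \<in> PP \<Longrightarrow> Field (D P) = {y. (x P, y) \<in> P \<and> (y, smax P) \<in> P}"
  proof -
    fix P assume P: "P \<in> PP"
    show "Field (D P) = {y. (x P, y) \<in> P \<and> (y, smax P) \<in> P}" unfolding D_def by (rule seg_field[OF pPP[OF P]])
  qed
  have PV: "\<And>P. P \<in> PP \<Longrightarrow> Field P \<subseteq> V" unfolding V_def by (rule vert_sub)
  have Rp: "R \<in> G \<and> is_path R \<and> is_min R (smin R) \<and> Field R \<inter> A = {smin R} \<and>
         is_max R (smax R) \<and> Field R \<inter> B = {smax R}" using AB_props[OF G R] .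
  define r0 where "r0 = smin R"
  define rE where "rE = smax R"
  have RG: "R \<in> G" and pR: "is_path R" and r0: "is_min R r0" "Field R \<inter> A = {r0}"
    and rE: "is_max R rE" "Field R \<inter> B = {rE}" using Rp unfolding r0_def rE_def by blast+
  have finRA: "finite (Field R \<inter> A)" "finite (Field R \<inter> B)" using r0 rE by simp_all
  have r0F: "r0 \<in> Field R" using r0 unfolding is_min_def by blast
  have rEF: "rE \<in> Field R" using rE unfolding is_max_def by blast
  have r0A: "r0 \<in> A" using r0 by blast
  have rEB: "rE \<in> B" using rE by blast
  define T where "T = (\<Union>P\<in>PP. Field R \<inter> Field (C P))"
  have Tne: "T \<noteq> {}"
  proof (cases "r0 \<in> V")
    case True
    then obtain P where P: "P \<in> PP" "r0 \<in> Field P" unfolding V_def vertices_def by blast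
    then have "r0 = smin P" using Pp[OF P(1)] r0A by blast
    moreover have "(smin P, smin P) \<in> P" using Pp[OF P(1)] unfolding is_min_def by blast
    ultimately have "r0 \<in> Field (C P)" using FC[OF P(1)] sx[OF P(1)] by simp
    then show ?thesis unfolding T_def using P(1) r0F by blast
  next
    case False
    show ?thesis
    proof (cases "Field R \<inter> V = {}")
      case True
      have "piece G A B V R r0 rE" unfolding piece_def using RG r0 rE True finRA by blast
      then have "pwalk G A B PP 0 (\<lambda>_. R) (\<lambda>_. R) (\<lambda>_. rE) (\<lambda>_. r0)"
        using pwalk_zero[of r0 A PP G B R rE "\<lambda>_. R"] r0A False unfolding V_def by blast
      moreover have "rE \<notin> V" using True rEF by blast
      ultimately have "walk G A B PP 0 (\<lambda>_. R) (\<lambda>_. R) (\<lambda>_. rE) (\<lambda>_. r0)"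
        unfolding walk_def V_def using rEB by simp
      then show ?thesis using nowalk by blast
    next
      case ne: False
      have ex: "\<exists>m\<in>(\<Union>P\<in>PP. Field R \<inter> Field P). \<forall>y\<in>(\<Union>P\<in>PP. Field R \<inter> Field P). (m, y) \<in> R"
      proof (rule path_minU[OF pR fin])
        show "\<forall>i\<in>PP. Field R \<inter> Field i \<subseteq> Field R" by blast
        show "\<forall>i\<in>PP. Field R \<inter> Field i \<noteq> {} \<longrightarrow> (\<exists>m\<in>Field R \<inter> Field i. \<forall>y\<in>Field R \<inter> Field i. (m, y) \<in> R)"
        proof (intro ballI impI)
          fix i assume i: "i \<in> PP" "Field R \<inter> Field i \<noteq> {}"
          show "\<exists>m\<in>Field R \<inter> Field i. \<forall>y\<in>Field R \<inter> Field i. (m, y) \<in> R"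
            by (rule inter_min[OF G RG GPP[OF i(1)] i(2)])
        qed
        show "(\<Union>i\<in>PP. Field R \<inter> Field i) \<noteq> {}" using ne unfolding V_def vertices_def by blast
      qed
      then obtain y where y: "y \<in> (\<Union>P\<in>PP. Field R \<inter> Field P)" and ymin: "\<forall>u\<in>(\<Union>P\<in>PP. Field R \<inter> Field P). (y, u) \<in> R"
        by blast
      have yUV: "\<And>u. u \<in> Field R \<Longrightarrow> u \<in> V \<Longrightarrow> (y, u) \<in> R" using ymin unfolding V_def vertices_def by blast
      have yF: "y \<in> Field R" using y by blast
      have ry: "(r0, y) \<in> R" using r0 yF unfolding is_min_def by blast
      define R0 where "R0 = segment R r0 y"
      have R0G: "R0 \<in> G" unfolding R0_def by (rule ds_seg[OF G RG ry])
      have FR0: "Field R0 = {u. (r0, u) \<in> R \<and> (u, y) \<in> R}" unfolding R0_def by (rule seg_field[OF pR])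
      have R0sub: "Field R0 \<subseteq> Field R" unfolding R0_def by (rule seg_field_sub)
      have R0V: "Field R0 \<inter> V \<subseteq> {r0, y}"
      proof
        fix u assume u: "u \<in> Field R0 \<inter> V"
        then have "(y, u) \<in> R" using yUV R0sub by blast
        moreover have "(u, y) \<in> R" using u FR0 by blast
        ultimately show "u \<in> {r0, y}" using path_antisym[OF pR] by blast
      qed
      have "piece G A B V R0 r0 y" unfolding piece_def
        using R0G seg_min[OF pR ry] seg_max[OF pR ry] R0V finRA R0sub unfolding R0_def
        by (meson finite_subset inf_mono subset_refl)
      then have pw0: "pwalk G A B PP 0 (\<lambda>_. R0) (\<lambda>_. R) (\<lambda>_. y) (\<lambda>_. r0)"
        using pwalk_zero[of r0 A PP G B R0 y "\<lambda>_. R"] r0A False unfolding V_def by blast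
      obtain P where P: "P \<in> PP" "y \<in> Field P" using y by blast
      have "y \<in> V" using PV[OF P(1)] P(2) by blast
      then have yE: "y \<in> E" unfolding E_def Ent_def V_def using pw0 by blast
      have "(y, x P) \<in> P" using xE[OF P(1) yE P(2)] .
      moreover have "(smin P, y) \<in> P" using Pp[OF P(1)] P(2) unfolding is_min_def by blast
      ultimately have "y \<in> Field (C P)" using FC[OF P(1)] by blast
      then show ?thesis unfolding T_def using P(1) yF by blast
    qed
  qed
  have ex2: "\<exists>m\<in>T. \<forall>y\<in>T. (y, m) \<in> R"
    unfolding T_def
  proof (rule path_maxU[OF pR fin])
    show "\<forall>i\<in>PP. Field R \<inter> Field (C i) \<subseteq> Field R" by blast
    show "\<forall>i\<in>PP. Field R \<inter> Field (C i) \<noteq> {} \<longrightarrow> (\<exists>m\<in>Field R \<inter> Field (C i). \<forall>y\<in>Field R \<inter> Field (C i). (y, m) \<in> R)"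
    proof (intro ballI impI)
      fix i assume i: "i \<in> PP" "Field R \<inter> Field (C i) \<noteq> {}"
      show "\<exists>m\<in>Field R \<inter> Field (C i). \<forall>y\<in>Field R \<inter> Field (C i). (y, m) \<in> R"
        by (rule inter_max[OF G RG CG[OF i(1)] i(2)])
    qed
    show "(\<Union>i\<in>PP. Field R \<inter> Field (C i)) \<noteq> {}" using Tne unfolding T_def .
  qed
  then obtain t where tT: "t \<in> T" and tmax: "\<forall>y\<in>T. (y, t) \<in> R" by blast
  obtain P0 where P0: "P0 \<in> PP" "t \<in> Field R" "t \<in> Field (C P0)" using tT unfolding T_def by blast
  have pP0: "is_path P0" using Pp[OF P0(1)] by blast
  have tP0: "t \<in> Field P0" using P0(3) seg_field_sub[of P0 "smin P0" "x P0"] unfolding C_def by blast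
  have tx: "(t, x P0) \<in> P0" using P0(3) FC[OF P0(1)] by blast
  have tnx: "t \<noteq> x P0" using xR[OF P0(1)] P0(2) by blast
  obtain e where e: "e \<in> E" "e \<in> Field P0" "(t, e) \<in> P0" "t \<noteq> e" using xS[OF P0(1) tP0 tx tnx] by blast
  obtain m F Q z w where pw: "pwalk G A B PP m F Q z w" and ze: "z (Suc m) = e"
    using e(1) unfolding E_def Ent_def by blast
  have te: "(t, z (Suc m)) \<in> P0" "t \<noteq> z (Suc m)" using e ze by simp_all
  have trE: "(t, rE) \<in> R" using rE P0(2) unfolding is_max_def by blast
  define Rt where "Rt = segment R t rE"
  have RtG: "Rt \<in> G" unfolding Rt_def by (rule ds_seg[OF G RG trE])
  have pRt: "is_path Rt" using ds_path[OF G RtG] .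
  have FRt: "Field Rt = {u. (t, u) \<in> R \<and> (u, rE) \<in> R}" unfolding Rt_def by (rule seg_field[OF pR])
  have Rtsub: "Field Rt \<subseteq> Field R" unfolding Rt_def by (rule seg_field_sub)
  have Rtrel: "Rt \<subseteq> R" unfolding Rt_def by (rule seg_sub)
  have claim1: "\<And>u. u \<in> Field Rt \<Longrightarrow> u \<in> V \<Longrightarrow> u \<noteq> t \<Longrightarrow> \<exists>P\<in>PP. u \<in> Field (D P)"
  proof -
    fix u assume uRt: "u \<in> Field Rt" and uV: "u \<in> V" and ut: "u \<noteq> t"
    obtain P where P: "P \<in> PP" "u \<in> Field P" using uV unfolding V_def vertices_def by blast
    have pP: "is_path P" using Pp[OF P(1)] by blast
    have nC: "(u, x P) \<notin> P"
    proof
      assume ux: "(u, x P) \<in> P"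
      have "(smin P, u) \<in> P" using Pp[OF P(1)] P(2) unfolding is_min_def by blast
      then have "u \<in> Field (C P)" using FC[OF P(1)] ux by blast
      then have "u \<in> T" unfolding T_def using P(1) uRt Rtsub by blast
      then have "(u, t) \<in> R" using tmax by blast
      moreover have "(t, u) \<in> R" using uRt FRt by blast
      ultimately show False using path_antisym[OF pR] ut by blast
    qed
    have "(x P, u) \<in> P" using path_total[OF pP xF[OF P(1)] P(2)] nC by blast
    moreover have "(u, smax P) \<in> P" using Pp[OF P(1)] P(2) unfolding is_max_def by blast
    ultimately have "u \<in> Field (D P)" using FD[OF P(1)] by blast
    then show "\<exists>P\<in>PP. u \<in> Field (D P)" using P(1) by blast
  qed
  have claim2: "\<And>P. P \<in> PP \<Longrightarrow> t \<notin> Field (D P)"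
  proof
    fix P assume P: "P \<in> PP" and tD: "t \<in> Field (D P)"
    have "t \<in> Field P" using tD seg_field_sub[of P "x P" "smax P"] unfolding D_def by blast
    then have "P = P0" using dis P P0(1) tP0 by blast
    then have "(x P0, t) \<in> P0" using tD FD[OF P] by blast
    then show False using path_antisym[OF pP0 tx] tnx by blast
  qed
  define W' where "W' = (\<Union>P\<in>PP. Field Rt \<inter> Field (D P))"
  show False
  proof (cases "W' = {}")
    case True
    have RtV: "Field Rt \<inter> V \<subseteq> {t, rE}"
    proof
      fix u assume u: "u \<in> Field Rt \<inter> V"
      show "u \<in> {t, rE}"
      proof (rule ccontr)
        assume "u \<notin> {t, rE}"
        then have "u \<noteq> t" by blast
        then obtain P where "P \<in> PP" "u \<in> Field (D P)" using claim1 u by blast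
        then have "u \<in> W'" unfolding W'_def using u by blast
        then show False using True by blast
      qed
    qed
    have finRt: "finite (Field Rt \<inter> A)" "finite (Field Rt \<inter> B)"
      using finRA Rtsub by (meson finite_subset inf_mono subset_refl)+
    have pcRt: "piece G A B (vertices PP) Rt t rE" unfolding piece_def
      using RtG seg_min[OF pR trE] seg_max[OF pR trE] RtV finRt unfolding Rt_def V_def by blast
    have pw2: "pwalk G A B PP (Suc m) (F(Suc m := Rt)) (Q(Suc m := P0)) (z(Suc (Suc m) := rE)) (w(Suc m := t))"
      using pwalk_ext[OF pw P0(1) te pcRt] .
    have rEnV: "rE \<notin> V"
    proof
      assume rEV: "rE \<in> V"
      have rERt: "rE \<in> Field Rt" using seg_max[OF pR trE] unfolding Rt_def is_max_def by blast
      show False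
      proof (cases "rE = t")
        case True
        then have "t \<in> Field P0 \<inter> B" using tP0 rEB by blast
        then have "t = smax P0" using Pp[OF P0(1)] by blast
        then have "(x P0, t) \<in> P0" using xe[OF P0(1)] by simp
        then show False using path_antisym[OF pP0 tx] tnx by blast
      next
        case False
        then obtain P where "P \<in> PP" "rE \<in> Field (D P)" using claim1[OF rERt rEV] by blast
        then have "rE \<in> W'" unfolding W'_def using rERt by blast
        then show False using \<open>W' = {}\<close> by blast
      qed
    qed
    have "walk G A B PP (Suc m) (F(Suc m := Rt)) (Q(Suc m := P0)) (z(Suc (Suc m) := rE)) (w(Suc m := t))"
      unfolding walk_def using pw2 rEB rEnV unfolding V_def by simp
    then show False using nowalk by blast
  next
    case False
    have ex3: "\<exists>m\<in>W'. \<forall>y\<in>W'. (m, y) \<in> Rt"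
      unfolding W'_def
    proof (rule path_minU[OF pRt fin])
      show "\<forall>i\<in>PP. Field Rt \<inter> Field (D i) \<subseteq> Field Rt" by blast
      show "\<forall>i\<in>PP. Field Rt \<inter> Field (D i) \<noteq> {} \<longrightarrow> (\<exists>m\<in>Field Rt \<inter> Field (D i). \<forall>y\<in>Field Rt \<inter> Field (D i). (m, y) \<in> Rt)"
      proof (intro ballI impI)
        fix i assume i: "i \<in> PP" "Field Rt \<inter> Field (D i) \<noteq> {}"
        show "\<exists>m\<in>Field Rt \<inter> Field (D i). \<forall>y\<in>Field Rt \<inter> Field (D i). (m, y) \<in> Rt"
          by (rule inter_min[OF G RtG DG[OF i(1)] i(2)])
      qed
      show "(\<Union>i\<in>PP. Field Rt \<inter> Field (D i)) \<noteq> {}" using False unfolding W'_def .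
    qed
    then obtain u0 where u0: "u0 \<in> W'" and u0min: "\<forall>y\<in>W'. (u0, y) \<in> Rt" by blast
    obtain P1 where P1: "P1 \<in> PP" "u0 \<in> Field Rt" "u0 \<in> Field (D P1)" using u0 unfolding W'_def by blast
    have pP1: "is_path P1" using Pp[OF P1(1)] by blast
    have u0P1: "u0 \<in> Field P1" using P1(3) seg_field_sub[of P1 "x P1" "smax P1"] unfolding D_def by blast
    have tu0: "(t, u0) \<in> R" using P1(2) FRt by blast
    have u0t: "u0 \<noteq> t" using claim2[OF P1(1)] P1(3) by blast
    define Rs where "Rs = segment R t u0"
    have RsG: "Rs \<in> G" unfolding Rs_def by (rule ds_seg[OF G RG tu0])
    have FRs: "Field Rs = {u. (t, u) \<in> R \<and> (u, u0) \<in> R}" unfolding Rs_def by (rule seg_field[OF pR])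
    have Rssub: "Field Rs \<subseteq> Field R" unfolding Rs_def by (rule seg_field_sub)
    have u0rE: "(u0, rE) \<in> R" using P1(2) FRt by blast
    have RsV: "Field Rs \<inter> V \<subseteq> {t, u0}"
    proof
      fix u assume u: "u \<in> Field Rs \<inter> V"
      show "u \<in> {t, u0}"
      proof (cases "u = t")
        case True then show ?thesis by blast
      next
        case False
        have tu: "(t, u) \<in> R" and uu0: "(u, u0) \<in> R" using u FRs by blast+
        have "(u, rE) \<in> R" using path_trans[OF pR uu0 u0rE] .
        then have uRt: "u \<in> Field Rt" using FRt tu by blast
        then obtain P where "P \<in> PP" "u \<in> Field (D P)" using claim1 u False by blast
        then have "u \<in> W'" unfolding W'_def using uRt by blast
        then have "(u0, u) \<in> Rt" using u0min by blast
        then have "(u0, u) \<in> R" using Rtrel by blast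
        then have "u = u0" using path_antisym[OF pR uu0] by blast
        then show ?thesis by blast
      qed
    qed
    have finRs: "finite (Field Rs \<inter> A)" "finite (Field Rs \<inter> B)"
      using finRA Rssub by (meson finite_subset inf_mono subset_refl)+
    have pcRs: "piece G A B (vertices PP) Rs t u0" unfolding piece_def
      using RsG seg_min[OF pR tu0] seg_max[OF pR tu0] RsV finRs unfolding Rs_def V_def by blast
    have pw2: "pwalk G A B PP (Suc m) (F(Suc m := Rs)) (Q(Suc m := P0)) (z(Suc (Suc m) := u0)) (w(Suc m := t))"
      using pwalk_ext[OF pw P0(1) te pcRs] .
    have "u0 \<in> V" using PV[OF P1(1)] u0P1 by blast
    then have u0E: "u0 \<in> E" unfolding E_def Ent_def V_def using pw2 by force
    have "(u0, x P1) \<in> P1" using xE[OF P1(1) u0E u0P1] .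
    moreover have "(x P1, u0) \<in> P1" using P1(3) FD[OF P1(1)] by blast
    ultimately have "u0 = x P1" using path_antisym[OF pP1] by blast
    moreover have "u0 \<in> Field R" using P1(2) Rtsub by blast
    ultimately show False using xR[OF P1(1)] by simp
  qed
qed



theorem mainTheorem8:
  fixes G :: "'a rel set" and A B :: "'a set" and k :: nat
  assumes "dipath_space G" and "A \<subseteq> vertices G" and "B \<subseteq> vertices G"
  shows "(\<exists>X. X \<subseteq> vertices G \<and> finite X \<and> card X < k \<and>
            (\<forall>R. AB_path G A B R \<longrightarrow> X \<inter> Field R \<noteq> {}))
       \<or> (\<exists>\<P>. \<P> \<subseteq> G \<and> finite \<P> \<and> card \<P> = k \<and> (\<forall>R\<in>\<P>. AB_path G A B R) \<and>
            (\<forall>P\<in>\<P>. \<forall>Q\<in>\<P>. P \<noteq> Q \<longrightarrow> Field P \<inter> Field Q = {}))"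
proof (induction k)
  case 0
  have "{} \<subseteq> G \<and> finite {} \<and> card {} = (0::nat) \<and> (\<forall>R\<in>{}. AB_path G A B R) \<and>
            (\<forall>P\<in>{}. \<forall>Q\<in>{}. P \<noteq> Q \<longrightarrow> Field P \<inter> Field Q = {})" by simp
  then show ?case by (intro disjI2 exI)
next
  case (Suc k)
  note G = assms(1)
  show ?case
  proof (cases "\<exists>X. X \<subseteq> vertices G \<and> finite X \<and> card X < k \<and> (\<forall>R. AB_path G A B R \<longrightarrow> X \<inter> Field R \<noteq> {})")
    case True
    then obtain X where "X \<subseteq> vertices G" "finite X" "card X < k" "\<forall>R. AB_path G A B R \<longrightarrow> X \<inter> Field R \<noteq> {}"
      by blast
    then have "X \<subseteq> vertices G \<and> finite X \<and> card X < Suc k \<and> (\<forall>R. AB_path G A B R \<longrightarrow> X \<inter> Field R \<noteq> {})"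
      by simp
    then show ?thesis by (intro disjI1 exI)
  next
    case False
    have "\<exists>\<P>. \<P> \<subseteq> G \<and> finite \<P> \<and> card \<P> = k \<and> (\<forall>R\<in>\<P>. AB_path G A B R) \<and>
            (\<forall>P\<in>\<P>. \<forall>Q\<in>\<P>. P \<noteq> Q \<longrightarrow> Field P \<inter> Field Q = {})"
      using Suc.IH False by (elim disjE) simp_all
    then obtain PP where PPG: "PP \<subseteq> G" and fin: "finite PP" and card: "card PP = k"
      and ab: "\<forall>R\<in>PP. AB_path G A B R" and dis: "\<forall>P\<in>PP. \<forall>Q\<in>PP. P \<noteq> Q \<longrightarrow> Field P \<inter> Field Q = {}"
      by blast
    show ?thesis
    proof (cases "\<exists>m F Q z w. walk G A B PP m F Q z w")
      case True
      then obtain m F Q z w where W: "walk G A B PP m F Q z w" by blast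
      have "\<forall>P\<in>PP. gpath G A B P"
      proof
        fix P assume "P \<in> PP"
        then show "gpath G A B P" using ab by (simp add: AB_gpath)
      qed
      then have L: "linkage G A B PP" unfolding linkage_def using fin dis by blast
      obtain PP' where L': "linkage G A B PP'" and c': "card PP' = Suc (card PP)"
        using augment[OF G L W] by blast
      obtain RR where RR: "RR \<subseteq> G" "finite RR" "card RR = card PP'" "\<forall>R\<in>RR. AB_path G A B R"
            "\<forall>P\<in>RR. \<forall>Q\<in>RR. P \<noteq> Q \<longrightarrow> Field P \<inter> Field Q = {}"
        using linkage_to_AB[OF G L'] by blast
      have "card RR = Suc k" using RR(3) c' card by simp
      then show ?thesis using RR by (intro disjI2 exI[of _ RR]) simp
    next
      case False
      then have nowalk: "\<forall>m F Q z w. \<not> walk G A B PP m F Q z w" by blast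
      define X where "X = xpt G A B PP ` PP"
      have sep: "\<forall>R. AB_path G A B R \<longrightarrow> X \<inter> Field R \<noteq> {}"
        unfolding X_def using separate[OF G fin ab dis nowalk] by blast
      have XV: "X \<subseteq> vertices G"
      proof
        fix u assume "u \<in> X"
        then obtain P where P: "P \<in> PP" "u = xpt G A B PP P" unfolding X_def by blast
        have pr: "P \<in> G \<and> is_path P \<and> is_min P (smin P) \<and> Field P \<inter> A = {smin P} \<and>
         is_max P (smax P) \<and> Field P \<inter> B = {smax P}" using AB_props[OF G, of A B P] ab P(1) by blast
        then have "xpt G A B PP P \<in> Field P" using xpt_props(1)[of P "smin P" G A B PP] by blast
        then have "u \<in> Field P" using P(2) by simp
        then show "u \<in> vertices G" using pr vert_sub[of P G] by blast
      qed
      have "finite X" unfolding X_def using fin by simp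
      moreover have "card X < Suc k" unfolding X_def using card_image_le[OF fin, of "xpt G A B PP"] card by simp
      ultimately show ?thesis using sep XV by (intro disjI1 exI[of _ X]) simp
    qed
  qed
qed

end
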